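(* Fix $N\ge1$. For $i\ge1$ let $f_i,g_i,h_i$ be modular forms of weight $i$ on $\Gamma_1(N)$, let $u,v\ge1$, $w\ge1$ with $f_u\ne0$, $g_v\ne0$, and suppose $f_u^vg_v^{-u}$ is not constant. Then the functions $f=\sum_{i=1}^uf_i$, $g=\sum_{i=1}^vg_i$ and $h=E_2+\sum_{i=1}^wh_i$ are algebraically independent over $\mathbb{C}$.
   Context: $E_2(z)=1-24\sum_{n\ge1}\sigma_1(n)q^n$, $q=e^{2\pi iz}$, $\sigma_1(n)=\sum_{d\mid n}d$. *)

theory Defs
  imports "HOL-Complex_Analysis.Complex_Analysis" "HOL-Number_Theory.Number_Theory"
begin

definition upper_half_plane :: "complex set" where
  "upper_half_plane = {z. Im z > 0}"

definition SL2Z :: "(int \<times> int \<times> int \<times> int) set" where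
  "SL2Z = {(a,b,c,d). a*d - b*c = 1}"

definition Gamma1 :: "nat \<Rightarrow> (int \<times> int \<times> int \<times> int) set" where
  "Gamma1 N = {(a,b,c,d). a*d - b*c = 1 \<and> [a = 1] (mod int N) \<and> [d = 1] (mod int N)
                \<and> [c = 0] (mod int N)}"

definition moebius_act :: "int \<times> int \<times> int \<times> int \<Rightarrow> complex \<Rightarrow> complex" where
  "moebius_act M z = (case M of (a,b,c,d) \<Rightarrow>
      (of_int a * z + of_int b) / (of_int c * z + of_int d))"

definition automorphy_factor :: "int \<times> int \<times> int \<times> int \<Rightarrow> complex \<Rightarrow> complex" where
  "automorphy_factor M z = (case M of (a,b,c,d) \<Rightarrow> of_int c * z + of_int d)"

text \<open>Modular form of weight k on Gamma_1(N): holomorphic on the upper half-plane,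
  invariant under the weight-k slash action of Gamma_1(N), and holomorphic at every cusp,
  i.e. for every gamma in SL2(Z) the slashed function (cz+d)^(-k) f(gamma z) is bounded
  as Im z tends to infinity.\<close>
definition modular_form :: "nat \<Rightarrow> nat \<Rightarrow> (complex \<Rightarrow> complex) \<Rightarrow> bool" where
  "modular_form N k f \<longleftrightarrow>
     f holomorphic_on upper_half_plane \<and>
     (\<forall>M\<in>Gamma1 N. \<forall>z\<in>upper_half_plane.
        f (moebius_act M z) = automorphy_factor M z ^ k * f z) \<and>
     (\<forall>M\<in>SL2Z. \<exists>B y0. \<forall>z. Im z \<ge> y0 \<longrightarrow>
        norm (f (moebius_act M z)) \<le> B * norm (automorphy_factor M z) ^ k)"

definition sigma1 :: "nat \<Rightarrow> nat" where
  "sigma1 n = (\<Sum>d\<in>{d. d dvd n}. d)"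

definition Eisenstein_E2 :: "complex \<Rightarrow> complex" where
  "Eisenstein_E2 z = 1 - 24 * (\<Sum>n. of_nat (sigma1 (Suc n)) * exp (2 * pi * \<i> * z) ^ Suc n)"

definition alg_indep3 :: "(complex \<Rightarrow> complex) \<Rightarrow> (complex \<Rightarrow> complex) \<Rightarrow> (complex \<Rightarrow> complex) \<Rightarrow> bool" where
  "alg_indep3 f g h \<longleftrightarrow>
     (\<forall>(S :: (nat \<times> nat \<times> nat) set) (c :: nat \<times> nat \<times> nat \<Rightarrow> complex). finite S \<longrightarrow>
        (\<forall>z\<in>upper_half_plane.
           (\<Sum>(a,b,e)\<in>S. c (a,b,e) * f z ^ a * g z ^ b * h z ^ e) = 0) \<longrightarrow>
        (\<forall>m\<in>S. c m = 0))"

end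

theory Submission
  imports Defs "HOL-Computational_Algebra.Polynomial"
begin

lemma sin_pi_nonzero_not_int:
  fixes z :: complex
  assumes "sin (of_real pi * z) \<noteq> 0"
  shows "z \<notin> \<int>"
proof
  assume "z \<in> \<int>"
  then obtain n where "z = of_int n" by (auto elim: Ints_cases)
  then have "of_real pi * z = of_real (real_of_int n * pi)" by simp
  then have "sin (of_real pi * z) = 0" using sin_eq_0 by blast
  with assms show False by simp
qed

lemma not_int_nonpos: "(z::complex) \<notin> \<int> \<Longrightarrow> z \<notin> \<int>\<^sub>\<le>\<^sub>0"
  using nonpos_Ints_subset_Ints by blast

lemma one_minus_not_int: "(z::complex) \<notin> \<int> \<Longrightarrow> 1 - z \<notin> \<int>"
proof
  assume "z \<notin> \<int>" "1 - z \<in> \<int>"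
  then have "1 - (1 - z) \<in> \<int>" by (intro Ints_diff) auto
  then show False using \<open>z \<notin> \<int>\<close> by simp
qed

lemma Digamma_reflection:
  fixes z :: complex
  assumes s: "sin (of_real pi * z) \<noteq> 0"
  shows "Digamma z - Digamma (1 - z) = - of_real pi * cos (of_real pi * z) / sin (of_real pi * z)"
proof -
  define S where "S = {w::complex. sin (of_real pi * w) \<noteq> 0}"
  have oS: "open S" unfolding S_def
    by (intro open_Collect_neq continuous_intros)
  have zS: "z \<in> S" using s by (simp add: S_def)
  have nz: "z \<notin> \<int>" by (rule sin_pi_nonzero_not_int[OF s])
  have nz1: "1 - z \<notin> \<int>" using nz by (rule one_minus_not_int)
  have D1: "((\<lambda>w. Gamma w * Gamma (1 - w)) has_field_derivative
     (Gamma z * Digamma z * Gamma (1 - z) + Gamma z * (Gamma (1 - z) * Digamma (1 - z) * (-1)))) (at z)"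
    using not_int_nonpos[OF nz] not_int_nonpos[OF nz1]
    by (auto intro!: derivative_eq_intros)
  have D2: "((\<lambda>w. Gamma w * Gamma (1 - w)) has_field_derivative
       (- (of_real pi * (cos (of_real pi * z) * of_real pi)) / (sin (of_real pi * z))^2)) (at z)"
  proof -
    have "((\<lambda>w. of_real pi / sin (of_real pi * w)) has_field_derivative
       (- (of_real pi * (cos (of_real pi * z) * of_real pi)) / (sin (of_real pi * z))^2)) (at z)"
      using s by (auto intro!: derivative_eq_intros simp: power2_eq_square field_simps)
    then show ?thesis
      by (rule has_field_derivative_transform_within_open[OF _ oS zS])
         (simp add: Gamma_reflection_complex)
  qed
  have eq: "Gamma z * Digamma z * Gamma (1 - z) + Gamma z * (Gamma (1 - z) * Digamma (1 - z) * (-1))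
     = - (of_real pi * (cos (of_real pi * z) * of_real pi)) / (sin (of_real pi * z))^2"
    using DERIV_unique[OF D1 D2] .
  have GG: "Gamma z * Gamma (1 - z) = of_real pi / sin (of_real pi * z)"
    by (rule Gamma_reflection_complex)
  have "Gamma z * Gamma (1 - z) * (Digamma z - Digamma (1 - z)) =
     - (of_real pi * (cos (of_real pi * z) * of_real pi)) / (sin (of_real pi * z))^2"
    using eq by (simp add: algebra_simps)
  then have "of_real pi / sin (of_real pi * z) * (Digamma z - Digamma (1 - z)) =
     - (of_real pi * (cos (of_real pi * z) * of_real pi)) / (sin (of_real pi * z))^2"
    by (simp add: GG)
  then have h: "of_real pi / sin (of_real pi * z) * (Digamma z - Digamma (1 - z)) =
     - (of_real pi * (cos (of_real pi * z) * of_real pi)) / (sin (of_real pi * z))^2" .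
  have "Digamma z - Digamma (1 - z) = (of_real pi / sin (of_real pi * z) * (Digamma z - Digamma (1 - z))) * (sin (of_real pi * z) / of_real pi)"
    using s by (simp add: field_simps)
  also have "\<dots> = (- (of_real pi * (cos (of_real pi * z) * of_real pi)) / (sin (of_real pi * z))^2) * (sin (of_real pi * z) / of_real pi)"
    by (simp only: h)
  also have "\<dots> = - of_real pi * cos (of_real pi * z) / sin (of_real pi * z)"
    using s by (simp add: field_simps power2_eq_square)
  finally show ?thesis .
qed

lemma aux_trig_alg:
  fixes s c p :: complex
  assumes "s \<noteq> 0" "c * c + s * s = 1"
  shows "(p * (s * p) * s + p * c * (c * p)) / (s * s) = p ^ 2 / s ^ 2"
proof -
  have "p * (s * p) * s + p * c * (c * p) = p^2 * (c * c + s * s)"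
    by (simp add: algebra_simps power2_eq_square)
  then show ?thesis using assms by (simp add: power2_eq_square)
qed

lemma Polygamma1_reflection:
  fixes z :: complex
  assumes s: "sin (of_real pi * z) \<noteq> 0"
  shows "Polygamma 1 z + Polygamma 1 (1 - z) = of_real pi ^ 2 / sin (of_real pi * z) ^ 2"
proof -
  define S where "S = {w::complex. sin (of_real pi * w) \<noteq> 0}"
  have oS: "open S" unfolding S_def
    by (intro open_Collect_neq continuous_intros)
  have zS: "z \<in> S" using s by (simp add: S_def)
  have nz: "z \<notin> \<int>" by (rule sin_pi_nonzero_not_int[OF s])
  have nz1: "1 - z \<notin> \<int>" using nz by (rule one_minus_not_int)
  have D1: "((\<lambda>w. Digamma w - Digamma (1 - w)) has_field_derivative
     (Polygamma 1 z - Polygamma 1 (1 - z) * (-1))) (at z)"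
    using not_int_nonpos[OF nz] not_int_nonpos[OF nz1]
    by (auto intro!: derivative_eq_intros)
  have D2: "((\<lambda>w. Digamma w - Digamma (1 - w)) has_field_derivative
       (of_real pi ^ 2 / sin (of_real pi * z) ^ 2)) (at z)"
  proof -
    have "((\<lambda>w. - of_real pi * cos (of_real pi * w) / sin (of_real pi * w)) has_field_derivative
       (of_real pi ^ 2 / sin (of_real pi * z) ^ 2)) (at z)"
    proof -
      have "((\<lambda>w. - of_real pi * cos (of_real pi * w) / sin (of_real pi * w)) has_field_derivative
       ((of_real pi * (sin (of_real pi * z) * of_real pi) * sin (of_real pi * z)
         + of_real pi * cos (of_real pi * z) * (cos (of_real pi * z) * of_real pi))
         / (sin (of_real pi * z) * sin (of_real pi * z)))) (at z)"
        using s apply (auto intro!: derivative_eq_intros)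
        by (simp add: field_simps)
      moreover have "((of_real pi * (sin (of_real pi * z) * of_real pi) * sin (of_real pi * z)
         + of_real pi * cos (of_real pi * z) * (cos (of_real pi * z) * of_real pi))
         / (sin (of_real pi * z) * sin (of_real pi * z))) = of_real pi ^ 2 / sin (of_real pi * z) ^ 2"
        by (rule aux_trig_alg[OF s sin_cos_squared_add3])
      ultimately show ?thesis by simp
    qed
    then show ?thesis
      by (rule has_field_derivative_transform_within_open[OF _ oS zS])
         (simp add: Digamma_reflection S_def)
  qed
  show ?thesis using DERIV_unique[OF D1 D2] by simp
qed


lemma has_sum_int_split:
  fixes f :: "int \<Rightarrow> 'a::topological_comm_monoid_add"
  assumes "((\<lambda>k. f (int k)) has_sum A) UNIV" "((\<lambda>k. f (- int k - 1)) has_sum B) UNIV"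
  shows "(f has_sum (A + B)) UNIV"
proof -
  have i1: "inj_on int UNIV" by (simp add: inj_on_def)
  have i2: "inj_on (\<lambda>k::nat. - int k - 1) UNIV" by (simp add: inj_on_def)
  have h1: "(f has_sum A) (range int)"
    using assms(1) by (subst has_sum_reindex[OF i1]) (simp add: o_def)
  have h2: "(f has_sum B) (range (\<lambda>k::nat. - int k - 1))"
    using assms(2) by (subst has_sum_reindex[OF i2]) (simp add: o_def)
  have r1: "range int = {0..}"
    by (auto simp: image_iff dest: zero_le_imp_eq_int)
  have r2: "range (\<lambda>k::nat. - int k - 1) = {..<0}"
  proof -
    have "x \<in> range (\<lambda>k::nat. - int k - 1)" if "x < 0" for x :: int
    proof -
      have "x = - int (nat (- x - 1)) - 1" using that by simp
      then show ?thesis by blast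
    qed
    then show ?thesis by auto
  qed
  have "(f has_sum (A + B)) ({0..} \<union> {..<0})"
    by (rule has_sum_Un_disjoint) (use h1 h2 r1 r2 in auto)
  moreover have "{0..} \<union> {..<(0::int)} = UNIV" by auto
  ultimately show ?thesis by simp
qed

lemma norm_plus_nat_ge:
  fixes w :: complex
  assumes "real k \<ge> 2 * norm w"
  shows "norm (w + of_nat k) \<ge> real k / 2"
proof -
  have "norm (of_nat k :: complex) - norm w \<le> norm (w + of_nat k)"
    by (metis add.commute norm_diff_ineq)
  then show ?thesis using assms by simp
qed

lemma summable_inv_sq_shift:
  fixes w :: complex
  shows "summable (\<lambda>k. norm (1 / (w + of_nat k) ^ 2))"
proof (rule summable_comparison_test_ev)
  show "summable (\<lambda>k::nat. 4 * inverse (real k ^ 2))"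
    by (intro summable_mult inverse_power_summable) simp
  have "eventually (\<lambda>k. real k \<ge> 2 * norm w + 1) sequentially"
    by real_asymp
  then show "eventually (\<lambda>k. norm (norm (1 / (w + of_nat k) ^ 2)) \<le> 4 * inverse (real k ^ 2)) sequentially"
  proof eventually_elim
    case (elim k)
    then have k: "real k / 2 \<le> norm (w + of_nat k)" by (intro norm_plus_nat_ge) simp
    have kp: "real k > 0" using elim norm_ge_zero[of w] by linarith
    have "(real k / 2)^2 \<le> norm (w + of_nat k) ^ 2"
      using k kp by (intro power_mono) auto
    then have "inverse (norm (w + of_nat k) ^ 2) \<le> inverse ((real k / 2)^2)"
      using kp by (intro le_imp_inverse_le) auto
    then show ?case by (simp add: norm_divide norm_power field_simps)
  qed
qed

lemma summable_inv_diff_shift: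
  fixes a b :: complex
  shows "summable (\<lambda>k. norm (1 / (a + of_nat k) - 1 / (b + of_nat k)))"
proof (rule summable_comparison_test_ev)
  show "summable (\<lambda>k::nat. 4 * norm (b - a) * inverse (real k ^ 2))"
    by (intro summable_mult inverse_power_summable) simp
  have "eventually (\<lambda>k. real k \<ge> 2 * norm a + 2 * norm b + 1) sequentially"
    by real_asymp
  then show "eventually (\<lambda>k. norm (norm (1 / (a + of_nat k) - 1 / (b + of_nat k))) \<le> 4 * norm (b - a) * inverse (real k ^ 2)) sequentially"
  proof eventually_elim
    case (elim k)
    then have ka: "real k / 2 \<le> norm (a + of_nat k)" by (intro norm_plus_nat_ge) (use norm_ge_zero[of b] in linarith)
    from elim have kb: "real k / 2 \<le> norm (b + of_nat k)" by (intro norm_plus_nat_ge) (use norm_ge_zero[of a] in linarith)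
    have kp: "real k > 0" using elim norm_ge_zero[of a] norm_ge_zero[of b] by linarith
    have na: "a + of_nat k \<noteq> 0" using ka kp by auto
    have nb: "b + of_nat k \<noteq> 0" using kb kp by auto
    have eq: "1 / (a + of_nat k) - 1 / (b + of_nat k) = (b - a) / ((a + of_nat k) * (b + of_nat k))"
      using na nb by (simp add: field_simps)
    have "(real k / 2) * (real k / 2) \<le> norm (a + of_nat k) * norm (b + of_nat k)"
      using ka kb kp by (intro mult_mono) auto
    then have "inverse (norm (a + of_nat k) * norm (b + of_nat k)) \<le> inverse ((real k / 2) * (real k / 2))"
      using kp by (intro le_imp_inverse_le) auto
    then have "norm (b - a) * inverse (norm (a + of_nat k) * norm (b + of_nat k)) \<le> norm (b - a) * inverse ((real k / 2) * (real k / 2))"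
      by (intro mult_left_mono) auto
    moreover have "norm (1 / (a + of_nat k) - 1 / (b + of_nat k)) = norm (b - a) * inverse (norm (a + of_nat k) * norm (b + of_nat k))"
      by (subst eq) (simp add: norm_divide norm_mult divide_inverse norm_inverse)
    ultimately have "norm (norm (1 / (a + of_nat k) - 1 / (b + of_nat k))) \<le> norm (b - a) * inverse ((real k / 2) * (real k / 2))"
      by simp
    also have "norm (b - a) * inverse ((real k / 2) * (real k / 2)) = 4 * norm (b - a) * inverse (real k ^ 2)"
      by (simp add: field_simps power2_eq_square)
    finally show ?case .
  qed
qed

lemma Polygamma1_sums:
  fixes w :: complex
  assumes "w \<noteq> 0"
  shows "(\<lambda>k. 1 / (w + of_nat k) ^ 2) sums Polygamma 1 w"
  using Polygamma_LIMSEQ[OF assms, of 1] by (simp add: divide_inverse power2_eq_square inverse_mult_distrib)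

theorem inv_sq_has_sum:
  fixes w :: complex
  assumes s: "sin (of_real pi * w) \<noteq> 0"
  shows "((\<lambda>n::int. 1 / (w + of_int n) ^ 2) has_sum (of_real pi ^ 2 / sin (of_real pi * w) ^ 2)) UNIV"
proof -
  have nz: "w \<notin> \<int>" by (rule sin_pi_nonzero_not_int[OF s])
  have nz1: "1 - w \<notin> \<int>" using nz by (rule one_minus_not_int)
  have w0: "w \<noteq> 0" using nz by auto
  have w1: "1 - w \<noteq> 0" using nz1 by auto
  have A: "((\<lambda>k. 1 / (w + of_int (int k)) ^ 2) has_sum Polygamma 1 w) UNIV"
    using norm_summable_imp_has_sum[OF summable_inv_sq_shift Polygamma1_sums[OF w0]] by simp
  have B0: "((\<lambda>k. 1 / ((1 - w) + of_nat k) ^ 2) has_sum Polygamma 1 (1 - w)) UNIV"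
    by (rule norm_summable_imp_has_sum[OF summable_inv_sq_shift Polygamma1_sums[OF w1]])
  have "1 / ((1 - w) + of_nat k) ^ 2 = 1 / (w + of_int (- int k - 1)) ^ 2" for k
  proof -
    have "(1 - w) + of_nat k = - (w + of_int (- int k - 1))" by simp
    then show ?thesis by (metis power2_minus)
  qed
  then have B: "((\<lambda>k. 1 / (w + of_int (- int k - 1)) ^ 2) has_sum Polygamma 1 (1 - w)) UNIV"
    using B0 by simp
  show ?thesis using has_sum_int_split[OF A B] Polygamma1_reflection[OF s] by simp
qed

lemma Digamma_diff_sums:
  fixes a b :: complex
  assumes "a \<noteq> 0" "b \<noteq> 0"
  shows "(\<lambda>k. 1 / (a + of_nat k) - 1 / (b + of_nat k)) sums (Digamma b - Digamma a)"
proof -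
  have sa: "(\<lambda>k. inverse (of_nat (Suc k)) - inverse (a + of_nat k)) sums (Digamma a + euler_mascheroni)"
    using summable_Digamma[OF assms(1)] by (simp add: Digamma_def summable_sums)
  have sb: "(\<lambda>k. inverse (of_nat (Suc k)) - inverse (b + of_nat k)) sums (Digamma b + euler_mascheroni)"
    using summable_Digamma[OF assms(2)] by (simp add: Digamma_def summable_sums)
  from sums_diff[OF sb sa] show ?thesis by (simp add: divide_inverse)
qed

theorem inv_diff_has_sum:
  fixes a b :: complex
  assumes sa: "sin (of_real pi * a) \<noteq> 0" and sb: "sin (of_real pi * b) \<noteq> 0"
  shows "((\<lambda>n::int. 1 / (a + of_int n) - 1 / (b + of_int n)) has_sum
     (of_real pi * cos (of_real pi * a) / sin (of_real pi * a) - of_real pi * cos (of_real pi * b) / sin (of_real pi * b))) UNIV"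
proof -
  have na: "a \<notin> \<int>" by (rule sin_pi_nonzero_not_int[OF sa])
  have nb: "b \<notin> \<int>" by (rule sin_pi_nonzero_not_int[OF sb])
  have na1: "1 - a \<notin> \<int>" using na by (rule one_minus_not_int)
  have nb1: "1 - b \<notin> \<int>" using nb by (rule one_minus_not_int)
  have a0: "a \<noteq> 0" "b \<noteq> 0" "1 - a \<noteq> 0" "1 - b \<noteq> 0" using na nb na1 nb1 by auto
  have A: "((\<lambda>k. 1 / (a + of_int (int k)) - 1 / (b + of_int (int k))) has_sum (Digamma b - Digamma a)) UNIV"
    using norm_summable_imp_has_sum[OF summable_inv_diff_shift Digamma_diff_sums[OF a0(1,2)]] by simp
  have B0: "((\<lambda>k. 1 / ((1 - b) + of_nat k) - 1 / ((1 - a) + of_nat k)) has_sum (Digamma (1 - a) - Digamma (1 - b))) UNIV"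
    by (rule norm_summable_imp_has_sum[OF summable_inv_diff_shift Digamma_diff_sums[OF a0(4,3)]])
  have "1 / ((1 - b) + of_nat k) - 1 / ((1 - a) + of_nat k) = 1 / (a + of_int (- int k - 1)) - 1 / (b + of_int (- int k - 1))" for k
  proof -
    have e1: "(1 - b) + of_nat k = - (b + of_int (- int k - 1))" by simp
    have e2: "(1 - a) + of_nat k = - (a + of_int (- int k - 1))" by simp
    have "1 / ((1 - b) + of_nat k) - 1 / ((1 - a) + of_nat k) =
      - (1 / (b + of_int (- int k - 1))) - - (1 / (a + of_int (- int k - 1)))"
      by (simp only: e1 e2 divide_minus_right)
    then show ?thesis by (simp only: diff_minus_eq_add) (simp add: algebra_simps)
  qed
  then have B: "((\<lambda>k. 1 / (a + of_int (- int k - 1)) - 1 / (b + of_int (- int k - 1))) has_sum (Digamma (1 - a) - Digamma (1 - b))) UNIV"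
    using B0 by simp
  have "Digamma b - Digamma a + (Digamma (1 - a) - Digamma (1 - b)) =
        (Digamma b - Digamma (1 - b)) - (Digamma a - Digamma (1 - a))" by simp
  also have "\<dots> = of_real pi * cos (of_real pi * a) / sin (of_real pi * a) - of_real pi * cos (of_real pi * b) / sin (of_real pi * b)"
    by (simp add: Digamma_reflection[OF sa] Digamma_reflection[OF sb])
  finally show ?thesis using has_sum_int_split[OF A B] by simp
qed


definition Kz :: "complex \<Rightarrow> real" where
  "Kz z = 2 + (1 + 2 * Re z ^ 2) / Im z ^ 2"

lemma Kz_pos: "Im z > 0 \<Longrightarrow> Kz z \<ge> 2"
  unfolding Kz_def by (auto intro!: divide_nonneg_pos)

lemma lat_lower:
  fixes z :: complex and m n :: int
  assumes y: "Im z > 0"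
  shows "real_of_int m ^ 2 + real_of_int n ^ 2 \<le> Kz z * norm (of_int m * z + of_int n) ^ 2"
proof -
  define x where "x = Re z"
  define yy where "yy = Im z"
  have yy: "yy > 0" using y by (simp add: yy_def)
  have N: "norm (of_int m * z + of_int n) ^ 2 = (real_of_int m * x + real_of_int n) ^ 2 + (real_of_int m * yy) ^ 2"
    by (simp add: cmod_power2 x_def yy_def)
  define A where "A = real_of_int m * x + real_of_int n"
  define B where "B = real_of_int m * yy"
  define c where "c = (1 + 2 * x ^ 2) / yy ^ 2"
  have c0: "c \<ge> 0" unfolding c_def by (auto intro!: divide_nonneg_pos)
  have K: "Kz z = 2 + c" by (simp add: Kz_def c_def x_def yy_def)
  have n_eq: "real_of_int n = A - real_of_int m * x" by (simp add: A_def)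
  have h1: "real_of_int n ^ 2 \<le> 2 * A ^ 2 + 2 * (real_of_int m * x) ^ 2"
  proof -
    have "(A - real_of_int m * x)^2 + (A + real_of_int m * x)^2 = 2 * A ^ 2 + 2 * (real_of_int m * x) ^ 2"
      by (simp add: power2_eq_square algebra_simps)
    moreover have "(A + real_of_int m * x)^2 \<ge> 0" by simp
    ultimately show ?thesis unfolding n_eq by linarith
  qed
  have h2: "real_of_int m ^ 2 * (1 + 2 * x ^ 2) = c * B ^ 2"
    unfolding c_def B_def using yy by (simp add: field_simps power2_eq_square)
  have "real_of_int m ^ 2 + real_of_int n ^ 2 \<le> 2 * A ^ 2 + c * B ^ 2"
    using h1 h2 by (simp add: algebra_simps power2_eq_square)
  also have "\<dots> \<le> (2 + c) * (A ^ 2 + B ^ 2)"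
    using c0 by (simp add: algebra_simps)
  finally show ?thesis by (simp add: K N A_def B_def)
qed

lemma one_plus_prod_le:
  fixes a b :: real
  assumes "a \<ge> 0" "b \<ge> 0" "a + b \<ge> 1"
  shows "(1 + a) * (1 + b) \<le> 5 * (a ^ 2 + b ^ 2)"
proof -
  have s1: "1 \<le> (a + b) ^ 2" using assms by (simp add: one_le_power)
  have s2: "a + b \<le> (a + b) ^ 2" using assms by (simp add: power2_eq_square)
  have s3: "2 * (a * b) \<le> a ^ 2 + b ^ 2"
    using sum_squares_ge_zero[of "a - b" 0] by (simp add: power2_diff algebra_simps power2_eq_square)
  have s4: "(a + b) ^ 2 = a ^ 2 + b ^ 2 + 2 * (a * b)" by (simp add: power2_sum)
  have "(1 + a) * (1 + b) = 1 + (a + b) + a * b" by (simp add: algebra_simps)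
  moreover have aux: "\<And>S s t Q r :: real. 1 \<le> S \<Longrightarrow> s \<le> S \<Longrightarrow> 2 * t \<le> Q \<Longrightarrow> S = Q + 2 * t \<Longrightarrow> r = 1 + s + t \<Longrightarrow> r \<le> 5 * Q"
    by linarith
  ultimately show ?thesis using aux[OF s1 s2 s3 s4] by simp
qed

lemma lat_lower2:
  fixes z :: complex and m n :: int
  assumes y: "Im z > 0" and nz: "(m, n) \<noteq> (0, 0)"
  shows "(1 + \<bar>real_of_int m\<bar>) * (1 + \<bar>real_of_int n\<bar>) \<le> 5 * Kz z * norm (of_int m * z + of_int n) ^ 2"
proof -
  have "\<bar>real_of_int m\<bar> + \<bar>real_of_int n\<bar> \<ge> 1" using nz by auto
  then have "(1 + \<bar>real_of_int m\<bar>) * (1 + \<bar>real_of_int n\<bar>) \<le> 5 * (\<bar>real_of_int m\<bar> ^ 2 + \<bar>real_of_int n\<bar> ^ 2)"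
    by (intro one_plus_prod_le) auto
  also have "\<dots> = 5 * (real_of_int m ^ 2 + real_of_int n ^ 2)" by simp
  also have "\<dots> \<le> 5 * (Kz z * norm (of_int m * z + of_int n) ^ 2)"
    using lat_lower[OF y, of m n] by simp
  finally show ?thesis by simp
qed

definition pf :: "int \<Rightarrow> real" where
  "pf k = 1 / ((1 + \<bar>real_of_int k\<bar>) * sqrt (1 + \<bar>real_of_int k\<bar>))"

lemma pf_pos: "pf k > 0"
  unfolding pf_def by (auto intro!: divide_pos_pos mult_pos_pos)

lemma pf_sq: "pf k ^ 2 = 1 / (1 + \<bar>real_of_int k\<bar>) ^ 3"
proof -
  have p: "1 + \<bar>real_of_int k\<bar> > 0" by simp
  have "sqrt (1 + \<bar>real_of_int k\<bar>) ^ 2 = 1 + \<bar>real_of_int k\<bar>" using p by simp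
  then show ?thesis unfolding pf_def by (simp add: power2_eq_square power3_eq_cube field_simps)
qed

lemma aa_bound:
  fixes z :: complex and m n :: int
  assumes y: "Im z > 0"
  shows "norm (1 / ((of_int m * z + of_int n) ^ 2 * (of_int m * z + of_int n + 1)))
         \<le> sqrt (250 * Kz z ^ 3) * (pf m * pf n)"
proof (cases "of_int m * z + of_int n = 0 \<or> of_int m * z + of_int n + 1 = 0")
  case True
  have "0 \<le> sqrt (250 * Kz z ^ 3)" using Kz_pos[OF y] by simp
  then show ?thesis using True pf_pos[of m] pf_pos[of n] by auto
next
  case False
  define w1 where "w1 = of_int m * z + of_int n"
  have w2: "of_int m * z + of_int n + 1 = of_int m * z + of_int (n + 1)" by simp
  have nz1: "(m, n) \<noteq> (0, 0)" using False by auto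
  have nz2: "(m, n + 1) \<noteq> (0, 0)"
  proof
    assume "(m, n + 1) = (0, 0)"
    then have "m = 0" "n = -1" by auto
    then show False using False by simp
  qed
  define P where "P = (1 + \<bar>real_of_int m\<bar>) * (1 + \<bar>real_of_int n\<bar>)"
  have Pp: "P > 0" unfolding P_def by (auto intro!: mult_pos_pos)
  have K2: "Kz z \<ge> 2" by (rule Kz_pos[OF y])
  have L1: "P \<le> 5 * Kz z * norm w1 ^ 2" unfolding P_def w1_def by (rule lat_lower2[OF y nz1])
  have L2': "(1 + \<bar>real_of_int m\<bar>) * (1 + \<bar>real_of_int (n+1)\<bar>) \<le> 5 * Kz z * norm (w1 + 1) ^ 2"
    unfolding w1_def w2 by (rule lat_lower2[OF y nz2])
  have nn: "(1 + \<bar>real_of_int n\<bar>) \<le> 2 * (1 + \<bar>real_of_int (n+1)\<bar>)"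
  proof -
    have g: "\<And>x::real. 1 + \<bar>x\<bar> \<le> 2 * (1 + \<bar>x + 1\<bar>)" by (simp add: abs_if)
    show ?thesis using g[of "real_of_int n"] by simp
  qed
  have "P \<le> 2 * ((1 + \<bar>real_of_int m\<bar>) * (1 + \<bar>real_of_int (n+1)\<bar>))"
  proof -
    have "(1 + \<bar>real_of_int m\<bar>) * (1 + \<bar>real_of_int n\<bar>) \<le> (1 + \<bar>real_of_int m\<bar>) * (2 * (1 + \<bar>real_of_int (n+1)\<bar>))"
      by (rule mult_left_mono[OF nn]) simp
    then show ?thesis unfolding P_def by (simp only: mult.left_commute[of _ 2])
  qed
  then have L2: "P \<le> 10 * Kz z * norm (w1 + 1) ^ 2" using L2' by linarith
  have a1: "norm w1 > 0" "norm (w1 + 1) > 0" using False by (auto simp: w1_def)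
  have "P ^ 3 = P * P * P" by (simp add: power3_eq_cube)
  also have "\<dots> \<le> (5 * Kz z * norm w1 ^ 2) * (5 * Kz z * norm w1 ^ 2) * (10 * Kz z * norm (w1 + 1) ^ 2)"
    using L1 L2 Pp K2 by (intro mult_mono) auto
  also have "\<dots> = 250 * Kz z ^ 3 * ((norm w1 ^ 2 * norm w1 ^ 2) * norm (w1 + 1) ^ 2)"
    by (simp add: power2_eq_square power3_eq_cube algebra_simps)
  finally have PP: "P ^ 3 \<le> 250 * Kz z ^ 3 * ((norm w1 ^ 2 * norm w1 ^ 2) * norm (w1 + 1) ^ 2)" .
  have nrm: "norm (1 / (w1 ^ 2 * (w1 + 1))) ^ 2 = 1 / ((norm w1 ^ 2 * norm w1 ^ 2) * norm (w1 + 1) ^ 2)"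
    by (simp add: norm_divide norm_mult norm_power power_mult_distrib power2_eq_square)
  have D: "(norm w1 ^ 2 * norm w1 ^ 2) * norm (w1 + 1) ^ 2 > 0" using a1 by simp
  have "1 / ((norm w1 ^ 2 * norm w1 ^ 2) * norm (w1 + 1) ^ 2) \<le> 250 * Kz z ^ 3 / P ^ 3"
    using PP D Pp by (simp add: field_simps)
  also have "\<dots> = (sqrt (250 * Kz z ^ 3) * (pf m * pf n)) ^ 2"
  proof -
    have "(pf m * pf n) ^ 2 = pf m ^ 2 * pf n ^ 2" by (simp add: power_mult_distrib)
    also have "\<dots> = 1 / (1 + \<bar>real_of_int m\<bar>) ^ 3 * (1 / (1 + \<bar>real_of_int n\<bar>) ^ 3)"
      by (simp only: pf_sq)
    also have "\<dots> = 1 / P ^ 3" by (simp add: P_def power_mult_distrib)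
    finally have "(pf m * pf n) ^ 2 = 1 / P ^ 3" .
    moreover have "sqrt (250 * Kz z ^ 3) ^ 2 = 250 * Kz z ^ 3" using K2 by simp
    ultimately show ?thesis by (simp add: power_mult_distrib)
  qed
  finally have "norm (1 / (w1 ^ 2 * (w1 + 1))) ^ 2 \<le> (sqrt (250 * Kz z ^ 3) * (pf m * pf n)) ^ 2"
    by (simp only: nrm)
  then have "norm (1 / (w1 ^ 2 * (w1 + 1))) \<le> sqrt (250 * Kz z ^ 3) * (pf m * pf n)"
  proof (rule power2_le_imp_le)
    have "0 \<le> 250 * Kz z ^ 3" using K2 by simp
    then have "0 \<le> sqrt (250 * Kz z ^ 3)" by simp
    then show "0 \<le> sqrt (250 * Kz z ^ 3) * (pf m * pf n)"
      using pf_pos[of m] pf_pos[of n] by simp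
  qed
  then show ?thesis by (simp add: w1_def)
qed

lemma inv_x_sqrt_powr:
  fixes x :: real
  assumes "x > 0"
  shows "1 / (x * sqrt x) = x powr (- 3 / 2)"
proof -
  have e: "x powr (1 + 1 / 2) = x powr 1 * x powr (1 / 2)"
    by (rule powr_add)
  have "x powr (3 / 2) = x powr 1 * x powr (1 / 2)"
    using e by simp
  also have "\<dots> = x * sqrt x"
    using assms by (simp add: powr_half_sqrt)
  finally show ?thesis
    using assms by (simp add: powr_minus_divide)
qed

lemma summable_pf_nat:
  "summable (\<lambda>k::nat. 1 / ((real k + c) * sqrt (real k + c)))" if "c \<ge> 1" for c :: real
proof (rule summable_comparison_test_ev)
  show "summable (\<lambda>k. real k powr (- 3 / 2))" by (simp add: summable_real_powr_iff)
  show "eventually (\<lambda>k. norm (1 / ((real k + c) * sqrt (real k + c))) \<le> real k powr (- 3 / 2)) sequentially"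
    using eventually_gt_at_top[of "0::nat"]
  proof eventually_elim
    case (elim k)
    have kp: "real k > 0" using elim by simp
    have "1 / ((real k + c) * sqrt (real k + c)) \<le> 1 / (real k * sqrt (real k))"
      using kp that by (intro divide_left_mono mult_mono real_sqrt_le_mono mult_pos_pos) auto
    also have "\<dots> = real k powr (- 3 / 2)" using inv_x_sqrt_powr[OF kp] .
    finally show ?case using kp that by simp
  qed
qed

lemma pf_summable: "pf summable_on (UNIV :: int set)"
proof -
  have s1: "summable (\<lambda>k::nat. pf (int k))"
    using summable_pf_nat[of 1] by (simp add: pf_def add.commute)
  have s2: "summable (\<lambda>k::nat. pf (- int k - 1))"
  proof -
    have "pf (- int k - 1) = 1 / ((real k + 2) * sqrt (real k + 2))" for k
      by (simp add: pf_def add.commute)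
    then show ?thesis using summable_pf_nat[of 2] by simp
  qed
  have p1: "((\<lambda>k::nat. pf (int k)) has_sum (suminf (\<lambda>k::nat. pf (int k)))) UNIV"
    using s1 pf_pos by (intro sums_nonneg_imp_has_sum summable_sums) (auto intro: less_imp_le)
  have p2: "((\<lambda>k::nat. pf (- int k - 1)) has_sum (suminf (\<lambda>k::nat. pf (- int k - 1)))) UNIV"
    using s2 pf_pos by (intro sums_nonneg_imp_has_sum summable_sums) (auto intro: less_imp_le)
  show ?thesis using has_sum_int_split[OF p1 p2] by (auto simp: summable_on_def)
qed

lemma aa_summable:
  fixes z :: complex
  assumes y: "Im z > 0"
  shows "(\<lambda>(m, n). 1 / ((of_int m * z + of_int n) ^ 2 * (of_int m * z + of_int n + 1)))
           summable_on (UNIV \<times> UNIV)"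
proof -
  define C where "C = sqrt (250 * Kz z ^ 3)"
  have C0: "C \<ge> 0" using Kz_pos[OF y] by (simp add: C_def)
  define g where "g = (\<lambda>(m::int, n::int). C * (pf m * pf n))"
  define S where "S = infsum pf UNIV"
  have ga: "(\<lambda>x. norm (g x)) summable_on UNIV \<times> UNIV"
  proof (subst Infinite_Sum.abs_summable_on_Sigma_iff, intro conjI ballI)
    fix m :: int
    show "(\<lambda>n. norm (g (m, n))) summable_on UNIV"
      unfolding g_def using pf_summable pf_pos C0
      by (auto intro!: summable_on_cmult_right simp: abs_of_pos abs_mult less_imp_le)
  next
    have "(\<Sum>\<^sub>\<infinity>n. norm (g (m, n))) = C * pf m * S" for m
    proof -
      have "(\<Sum>\<^sub>\<infinity>n. norm (g (m, n))) = (\<Sum>\<^sub>\<infinity>n. (C * pf m) * pf n)"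
        unfolding g_def using pf_pos C0 by (intro infsum_cong) (auto simp: abs_mult abs_of_pos less_imp_le)
      also have "\<dots> = (C * pf m) * S" unfolding S_def
        by (rule infsum_cmult_right') 
      finally show ?thesis .
    qed
    then show "(\<lambda>m. norm (\<Sum>\<^sub>\<infinity>n. norm (g (m, n)))) summable_on UNIV"
      using pf_summable pf_pos C0
      by (simp add: mult.commute mult.left_commute) (auto intro!: summable_on_cmult_right simp: abs_mult abs_of_pos less_imp_le)
  qed
  have "(\<lambda>x. norm ((\<lambda>(m, n). 1 / ((of_int m * z + of_int n) ^ 2 * (of_int m * z + of_int n + 1))) x)) summable_on (UNIV \<times> UNIV)"
  proof (rule Infinite_Sum.abs_summable_on_comparison_test[OF ga])
    fix x :: "int \<times> int"
    obtain m n where x: "x = (m, n)" by (cases x)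
    show "norm ((\<lambda>(m, n). 1 / ((of_int m * z + of_int n) ^ 2 * (of_int m * z + of_int n + 1))) x) \<le> norm (g x)"
      using aa_bound[OF y, of m n] pf_pos[of m] pf_pos[of n] C0
      by (simp add: x g_def C_def abs_mult abs_of_pos less_imp_le)
  qed
  then show ?thesis by (rule Infinite_Sum.abs_summable_summable)
qed


definition Phi :: "complex \<Rightarrow> complex" where
  "Phi w = of_real pi ^ 2 / sin (of_real pi * w) ^ 2"

definition ctn :: "complex \<Rightarrow> complex" where
  "ctn w = of_real pi * cos (of_real pi * w) / sin (of_real pi * w)"

lemma sin_nz_Im:
  fixes w :: complex
  assumes "Im w \<noteq> 0"
  shows "sin (of_real pi * w) \<noteq> 0"
proof
  assume "sin (of_real pi * w) = 0"
  then obtain x where "of_real pi * w = of_real (real_of_int x * pi)" using sin_eq_0 by blast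
  then have "Im (of_real pi * w) = 0" by (metis Im_complex_of_real)
  then show False using assms by simp
qed

lemma sin_pi_plus1: "sin (of_real pi * (w + 1)) = - sin (of_real pi * (w::complex))"
proof -
  have "sin (of_real pi * (w + 1)) = sin (of_real pi * w + of_real pi)" by (simp add: algebra_simps)
  also have "\<dots> = - sin (of_real pi * w)"
    by (simp add: sin_add sin_of_real[symmetric] cos_of_real[symmetric])
  finally show ?thesis .
qed

lemma cos_pi_plus1: "cos (of_real pi * (w + 1)) = - cos (of_real pi * (w::complex))"
proof -
  have "cos (of_real pi * (w + 1)) = cos (of_real pi * w + of_real pi)" by (simp add: algebra_simps)
  also have "\<dots> = - cos (of_real pi * w)"
    by (simp add: cos_add sin_of_real[symmetric] cos_of_real[symmetric])
  finally show ?thesis .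
qed

lemma ctn_plus1: "ctn (w + 1) = ctn w"
  unfolding ctn_def sin_pi_plus1 cos_pi_plus1 by simp

lemma ctn_minus: "ctn (- w) = - ctn w"
  unfolding ctn_def by simp

lemma has_sum_diff':
  fixes f g :: "'a \<Rightarrow> 'b::topological_ab_group_add"
  assumes "(f has_sum a) A" "(g has_sum b) A"
  shows "((\<lambda>x. f x - g x) has_sum (a - b)) A"
proof -
  have "((\<lambda>x. - g x) has_sum (- b)) A" using assms(2) by (simp add: has_sum_uminus)
  from has_sum_add[OF assms(1) this] show ?thesis by simp
qed

lemma Z2_real: "((\<lambda>n::int. 1 / (real_of_int n) ^ 2) has_sum (pi ^ 2 / 3)) UNIV"
proof -
  have s: "(\<lambda>k::nat. 1 / (real (Suc k)) ^ 2) sums (pi ^ 2 / 6)"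
    using inverse_squares_sums by simp
  have s0: "(\<lambda>k::nat. 1 / (real k) ^ 2) sums (pi ^ 2 / 6)"
    using sums_Suc_iff[of "\<lambda>k::nat. 1 / (real k) ^ 2" "pi ^ 2 / 6"] s by simp
  have A: "((\<lambda>k::nat. 1 / (real_of_int (int k)) ^ 2) has_sum (pi ^ 2 / 6)) UNIV"
    using sums_nonneg_imp_has_sum[OF s0] by simp
  have B: "((\<lambda>k::nat. 1 / (real_of_int (- int k - 1)) ^ 2) has_sum (pi ^ 2 / 6)) UNIV"
  proof -
    have "1 / (real_of_int (- int k - 1)) ^ 2 = 1 / (real (Suc k)) ^ 2" for k
      by (simp add: power2_eq_square algebra_simps)
    then show ?thesis using sums_nonneg_imp_has_sum[OF s] by simp
  qed
  show ?thesis using has_sum_int_split[OF A B] by simp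
qed

lemma B2_real: "((\<lambda>n::int. 1 / (real_of_int n * (real_of_int n + 1))) has_sum 2) UNIV"
proof -
  have t: "(\<lambda>k::nat. 1 / real (Suc k) - 1 / real (Suc (Suc k))) sums (1 / real (Suc 0) - 0)"
    by (rule telescope_sums'[of "\<lambda>k. 1 / real (Suc k)"]) (rule LIMSEQ_inverse_real_of_nat[unfolded inverse_eq_divide])
  have e: "1 / real (Suc k) - 1 / real (Suc (Suc k)) = 1 / (real (Suc k) * (real (Suc k) + 1))" for k
    by (simp add: field_simps)
  have s: "(\<lambda>k::nat. 1 / (real (Suc k) * (real (Suc k) + 1))) sums 1"
    using t unfolding e by simp
  have s0: "(\<lambda>k::nat. 1 / (real k * (real k + 1))) sums 1"
    using sums_Suc_iff[of "\<lambda>k::nat. 1 / (real k * (real k + 1))" 1] s by simp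
  have A: "((\<lambda>k::nat. 1 / (real_of_int (int k) * (real_of_int (int k) + 1))) has_sum 1) UNIV"
    using sums_nonneg_imp_has_sum[OF s0] by simp
  have B: "((\<lambda>k::nat. 1 / (real_of_int (- int k - 1) * (real_of_int (- int k - 1) + 1))) has_sum 1) UNIV"
  proof -
    have "1 / (real_of_int (- int k - 1) * (real_of_int (- int k - 1) + 1)) = 1 / (real k * (real k + 1))" for k
      by (simp add: algebra_simps)
    then show ?thesis using sums_nonneg_imp_has_sum[OF s0] by simp
  qed
  show ?thesis using has_sum_int_split[OF A B] by simp
qed

lemma Z2: "((\<lambda>n::int. 1 / (of_int n) ^ 2 :: complex) has_sum (of_real pi ^ 2 / 3)) UNIV"
proof -
  have "((\<lambda>n::int. of_real (1 / (real_of_int n) ^ 2) :: complex) has_sum of_real (pi ^ 2 / 3)) UNIV"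
    using Z2_real by (subst has_sum_of_real_iff)
  then show ?thesis by simp
qed

lemma B2: "((\<lambda>n::int. 1 / (of_int n * (of_int n + 1)) :: complex) has_sum 2) UNIV"
proof -
  have "((\<lambda>n::int. of_real (1 / (real_of_int n * (real_of_int n + 1))) :: complex) has_sum of_real 2) UNIV"
    using B2_real by (subst has_sum_of_real_iff)
  then show ?thesis by simp
qed


definition aaf :: "complex \<Rightarrow> int \<times> int \<Rightarrow> complex" where
  "aaf \<tau> = (\<lambda>(m, n). 1 / ((of_int m * \<tau> + of_int n) ^ 2 * (of_int m * \<tau> + of_int n + 1)))"

definition PS :: "complex \<Rightarrow> complex" where
  "PS \<tau> = infsum (\<lambda>m::int. Phi (of_int m * \<tau>)) (UNIV - {0})"

lemma key_id:
  fixes W :: complex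
  assumes "W \<noteq> 0" "W + 1 \<noteq> 0"
  shows "1 / (W ^ 2 * (W + 1)) = 1 / W ^ 2 - 1 / (W * (W + 1))"
    and "1 / (W * (W + 1)) = 1 / W - 1 / (W + 1)"
proof -
  have d1: "W ^ 2 * (W + 1) \<noteq> 0" "W * (W + 1) \<noteq> 0" using assms by auto
  have e1: "1 / W ^ 2 = (W + 1) / (W ^ 2 * (W + 1))" using assms by simp
  have e2: "1 / (W * (W + 1)) = W / (W ^ 2 * (W + 1))" using assms by (simp add: power2_eq_square)
  have "1 / W ^ 2 - 1 / (W * (W + 1)) = ((W + 1) - W) / (W ^ 2 * (W + 1))"
    unfolding e1 e2 by (rule diff_divide_distrib[symmetric])
  then show "1 / (W ^ 2 * (W + 1)) = 1 / W ^ 2 - 1 / (W * (W + 1))" by simp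
  have e3: "1 / W = (W + 1) / (W * (W + 1))" using assms by simp
  have e4: "1 / (W + 1) = W / (W * (W + 1))" using assms by simp
  have "1 / W - 1 / (W + 1) = ((W + 1) - W) / (W * (W + 1))"
    unfolding e3 e4 by (rule diff_divide_distrib[symmetric])
  then show "1 / (W * (W + 1)) = 1 / W - 1 / (W + 1)" by simp
qed

lemma has_sum_remove:
  fixes f :: "'a \<Rightarrow> 'b::banach"
  assumes "(f has_sum S) A" "x \<in> A"
  shows "(f has_sum (S - f x)) (A - {x})"
proof -
  have "f summable_on (A - {x})"
    using assms(1) by (rule summable_on_subset_banach[OF has_sum_imp_summable]) auto
  then obtain T where T: "(f has_sum T) (A - {x})" by (auto simp: summable_on_def)
  have "(f has_sum (f x + T)) (insert x (A - {x}))" by (rule has_sum_insert[OF _ T]) auto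
  then have "(f has_sum (f x + T)) A" using assms(2) by (simp add: insert_absorb)
  then have "S = f x + T" using assms(1) by (rule has_sum_unique[rotated])
  then show ?thesis using T by simp
qed

lemma row_nonzero:
  fixes \<tau> :: complex and m :: int
  assumes y: "Im \<tau> > 0" and m: "m \<noteq> 0"
  shows "((\<lambda>n. aaf \<tau> (m, n)) has_sum Phi (of_int m * \<tau>)) UNIV"
proof -
  define w where "w = of_int m * \<tau>"
  have Imw: "Im w \<noteq> 0" using y m by (simp add: w_def)
  have Imw1: "Im (w + 1) \<noteq> 0" using Imw by simp
  have e: "aaf \<tau> (m, n) = 1 / (w + of_int n) ^ 2 - (1 / (w + of_int n) - 1 / ((w + 1) + of_int n))" for n
  proof -
    have a: "w + of_int n \<noteq> 0"
    proof
      assume "w + of_int n = 0"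
      then have "Im (w + of_int n) = 0" by simp
      then show False using Imw by simp
    qed
    have b: "w + of_int n + 1 \<noteq> 0"
    proof
      assume "w + of_int n + 1 = 0"
      then have "Im (w + of_int n + 1) = 0" by simp
      then show False using Imw by simp
    qed
    have "aaf \<tau> (m, n) = 1 / ((w + of_int n) ^ 2 * (w + of_int n + 1))"
      by (simp add: aaf_def w_def)
    also have "\<dots> = 1 / (w + of_int n) ^ 2 - (1 / (w + of_int n) - 1 / (w + of_int n + 1))"
      using key_id[OF a b] by simp
    also have "w + of_int n + 1 = (w + 1) + of_int n" by simp
    finally show ?thesis .
  qed
  have s1: "((\<lambda>n::int. 1 / (w + of_int n) ^ 2) has_sum Phi w) UNIV"
    unfolding Phi_def by (rule inv_sq_has_sum[OF sin_nz_Im[OF Imw]])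
  have s2: "((\<lambda>n::int. 1 / (w + of_int n) - 1 / ((w + 1) + of_int n)) has_sum (ctn w - ctn (w + 1))) UNIV"
    unfolding ctn_def by (rule inv_diff_has_sum[OF sin_nz_Im[OF Imw] sin_nz_Im[OF Imw1]])
  have "((\<lambda>n. aaf \<tau> (m, n)) has_sum (Phi w - (ctn w - ctn (w + 1)))) UNIV"
    unfolding e by (rule has_sum_diff'[OF s1 s2])
  then show ?thesis by (simp add: ctn_plus1 w_def)
qed

lemma row_zero:
  fixes \<tau> :: complex
  shows "((\<lambda>n. aaf \<tau> (0, n)) has_sum (of_real pi ^ 2 / 3 - 2 - 1)) UNIV"
proof -
  have ind: "((\<lambda>n::int. if n = -1 then 1 else 0 :: complex) has_sum 1) UNIV"
  proof -
    have "((\<lambda>n::int. if n = -1 then 1 else 0 :: complex) has_sum 1) {-1}" by (rule has_sum_finiteI) auto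
    then show ?thesis by (subst (asm) has_sum_cong_neutral[of UNIV "{-1}"]) auto
  qed
  have e: "aaf \<tau> (0, n) = 1 / (of_int n) ^ 2 - 1 / (of_int n * (of_int n + 1)) - (if n = -1 then 1 else 0)" for n
  proof (cases "n = 0 \<or> n = -1")
    case True then show ?thesis by (auto simp: aaf_def)
  next
    case False
    then have a: "(of_int n :: complex) \<noteq> 0" "(of_int n + 1 :: complex) \<noteq> 0"
      by (auto simp: of_int_eq_iff[symmetric] simp del: of_int_eq_iff)
         (metis add.inverse_neutral add_eq_0_iff2 of_int_1 of_int_eq_iff of_int_minus)
    have "aaf \<tau> (0, n) = 1 / ((of_int n) ^ 2 * (of_int n + 1))"
      by (simp add: aaf_def)
    also have "\<dots> = 1 / (of_int n) ^ 2 - 1 / (of_int n * (of_int n + 1))"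
      using key_id(1)[OF a] by simp
    finally show ?thesis using False by simp
  qed
  show ?thesis unfolding e by (intro has_sum_diff' Z2 B2 ind)
qed

lemma rows_total:
  fixes \<tau> :: complex
  assumes y: "Im \<tau> > 0"
  shows "((\<lambda>m::int. Phi (of_int m * \<tau>)) has_sum PS \<tau>) (UNIV - {0})"
    and "infsum (aaf \<tau>) UNIV = PS \<tau> + (of_real pi ^ 2 / 3 - 3)"
proof -
  have sm: "aaf \<tau> summable_on (UNIV \<times> UNIV)"
    using aa_summable[OF y] unfolding aaf_def .
  define SA where "SA = infsum (aaf \<tau>) UNIV"
  have hs: "(aaf \<tau> has_sum SA) (Sigma UNIV (\<lambda>_. UNIV))"
    using sm by (simp add: SA_def)
  define rowv where "rowv m = (if m = 0 then of_real pi ^ 2 / 3 - 3 else Phi (of_int m * \<tau>))" for m :: int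
  have "(rowv has_sum SA) UNIV"
  proof (rule has_sum_SigmaD[OF hs])
    fix m :: int
    show "((\<lambda>n. aaf \<tau> (m, n)) has_sum rowv m) UNIV"
      using row_nonzero[OF y, of m] row_zero[of \<tau>] by (cases "m = 0") (auto simp: rowv_def)
  qed
  then have r: "(rowv has_sum (SA - rowv 0)) (UNIV - {0})" by (rule has_sum_remove) simp
  have r2: "((\<lambda>m::int. Phi (of_int m * \<tau>)) has_sum (SA - (of_real pi ^ 2 / 3 - 3))) (UNIV - {0})"
    using r by (subst has_sum_cong[where g = rowv]) (auto simp: rowv_def)
  then have "PS \<tau> = SA - (of_real pi ^ 2 / 3 - 3)" unfolding PS_def by (rule infsumI)
  then show "((\<lambda>m::int. Phi (of_int m * \<tau>)) has_sum PS \<tau>) (UNIV - {0})"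
    and "infsum (aaf \<tau>) UNIV = PS \<tau> + (of_real pi ^ 2 / 3 - 3)"
    using r2 by (simp_all add: SA_def)
qed


lemma Im_int_div:
  fixes z :: complex and n :: int
  assumes y: "Im z > 0" and n: "n \<noteq> 0"
  shows "Im (of_int n / z) \<noteq> 0"
proof -
  have z0: "z \<noteq> 0" using y by auto
  have "Im (of_int n / z) = - real_of_int n * Im z / (cmod z)^2"
    by (simp add: Im_divide cmod_power2)
  then show ?thesis using y n z0 by simp
qed

lemma lat_nz:
  fixes z :: complex and m n :: int
  assumes y: "Im z > 0" and n: "n \<noteq> 0"
  shows "of_int m * z + of_int n \<noteq> 0"
proof (cases "m = 0")
  case True then show ?thesis using n by simp
next
  case False
  show ?thesis
  proof
    assume "of_int m * z + of_int n = 0"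
    then have "Im (of_int m * z + of_int n) = 0" by simp
    then show False using False y by simp
  qed
qed

lemma inv_div_helper:
  fixes z W V :: complex
  assumes "z \<noteq> 0"
  shows "1 / z * (1 / (W / z) - 1 / (V / z)) = 1 / W - 1 / V"
    and "1 / z ^ 2 * (1 / (W / z) ^ 2) = 1 / W ^ 2"
proof -
  have "1 / z * (1 / (W / z) - 1 / (V / z)) = 1 / z * (z / W - z / V)" by simp
  also have "\<dots> = 1 / W - 1 / V" using assms by (simp add: right_diff_distrib)
  finally show "1 / z * (1 / (W / z) - 1 / (V / z)) = 1 / W - 1 / V" .
  show "1 / z ^ 2 * (1 / (W / z) ^ 2) = 1 / W ^ 2" using assms by (simp add: power_divide)
qed

lemma col_generic:
  fixes z :: complex and n :: int
  assumes y: "Im z > 0" and n0: "n \<noteq> 0" and n1: "n \<noteq> -1"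
  shows "((\<lambda>m. aaf z (m, n)) has_sum
     (1 / z ^ 2 * Phi (of_int n / z) - 1 / z * (ctn (of_int n / z) - ctn (of_int (n + 1) / z)))) UNIV"
proof -
  have z0: "z \<noteq> 0" using y by auto
  have n1': "n + 1 \<noteq> 0" using n1 by simp
  have e: "aaf z (m, n) = 1 / z ^ 2 * (1 / (of_int n / z + of_int m) ^ 2)
      - 1 / z * (1 / (of_int n / z + of_int m) - 1 / (of_int (n + 1) / z + of_int m))" for m
  proof -
    define W where "W = of_int m * z + of_int n"
    have a: "W \<noteq> 0" unfolding W_def by (rule lat_nz[OF y n0])
    have b: "W + 1 \<noteq> 0" using lat_nz[OF y n1', of m] by (simp add: W_def add.assoc)
    have W1: "of_int n / z + of_int m = W / z" using z0 by (simp add: W_def field_simps)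
    have W2: "of_int (n + 1) / z + of_int m = (W + 1) / z" using z0 by (simp add: W_def field_simps)
    have "aaf z (m, n) = 1 / (W ^ 2 * (W + 1))" by (simp add: aaf_def W_def)
    also have "\<dots> = 1 / W ^ 2 - (1 / W - 1 / (W + 1))"
      using key_id[OF a b] by simp
    also have "\<dots> = 1 / z ^ 2 * (1 / (W / z) ^ 2) - 1 / z * (1 / (W / z) - 1 / ((W + 1) / z))"
      by (simp only: inv_div_helper[OF z0])
    finally show ?thesis by (simp only: W1 W2)
  qed
  have s1: "((\<lambda>m::int. 1 / (of_int n / z + of_int m) ^ 2) has_sum Phi (of_int n / z)) UNIV"
    unfolding Phi_def by (rule inv_sq_has_sum[OF sin_nz_Im[OF Im_int_div[OF y n0]]])
  have s2: "((\<lambda>m::int. 1 / (of_int n / z + of_int m) - 1 / (of_int (n + 1) / z + of_int m)) has_sum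
       (ctn (of_int n / z) - ctn (of_int (n + 1) / z))) UNIV"
    unfolding ctn_def
    by (rule inv_diff_has_sum[OF sin_nz_Im[OF Im_int_div[OF y n0]] sin_nz_Im[OF Im_int_div[OF y n1']]])
  show ?thesis unfolding e
    by (intro has_sum_diff' has_sum_cmult_right s1 s2)
qed

lemma col_special:
  fixes z :: complex
  assumes y: "Im z > 0"
  shows "((\<lambda>m. aaf z (m, 0) + aaf z (m, -1)) has_sum
     (1 / z ^ 2 * (of_real pi ^ 2 / 3) + 1 / z ^ 2 * Phi (- 1 / z) - 1 / z * (ctn (- 1 / z) - ctn (1 / z)) - 3)) UNIV"
proof -
  have z0: "z \<noteq> 0" using y by auto
  have ind: "((\<lambda>m::int. if m = 0 then 3 else 0 :: complex) has_sum 3) UNIV"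
  proof -
    have "((\<lambda>m::int. if m = 0 then 3 else 0 :: complex) has_sum 3) {0}" by (rule has_sum_finiteI) auto
    then show ?thesis by (subst (asm) has_sum_cong_neutral[of UNIV "{0}"]) auto
  qed
  have e: "aaf z (m, 0) + aaf z (m, -1) = 1 / z ^ 2 * (1 / (of_int m) ^ 2) + 1 / z ^ 2 * (1 / (- 1 / z + of_int m) ^ 2)
      - 1 / z * (1 / (- 1 / z + of_int m) - 1 / (1 / z + of_int m)) - (if m = 0 then 3 else 0)" for m
  proof (cases "m = 0")
    case True
    then show ?thesis using z0 by (simp add: aaf_def power2_eq_square)
  next
    case False
    define W where "W = of_int m * z"
    have a: "W \<noteq> 0" using False z0 by (simp add: W_def)
    have b: "W + 1 \<noteq> 0" using lat_nz[OF y, of 1 m] by (simp add: W_def add.commute)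
    have c: "W - 1 \<noteq> 0" using lat_nz[OF y, of "-1" m] by (simp add: W_def)
    have c1: "(W - 1) + 1 \<noteq> 0" using a by simp
    have E1: "- 1 / z + of_int m = (W - 1) / z" using z0 by (simp add: W_def field_simps)
    have E2: "1 / z + of_int m = (W + 1) / z" using z0 by (simp add: W_def field_simps)
    have A0: "aaf z (m, 0) = 1 / W ^ 2 - (1 / W - 1 / (W + 1))"
      using key_id[OF a b] by (simp add: aaf_def W_def)
    have A1: "aaf z (m, -1) = 1 / (W - 1) ^ 2 - (1 / (W - 1) - 1 / W)"
      using key_id[OF c c1] by (simp add: aaf_def W_def)
    have "aaf z (m, 0) + aaf z (m, -1) = 1 / W ^ 2 + 1 / (W - 1) ^ 2 - (1 / (W - 1) - 1 / (W + 1))"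
      unfolding A0 A1 by simp
    also have "\<dots> = 1 / z ^ 2 * (1 / (of_int m) ^ 2) + 1 / z ^ 2 * (1 / ((W - 1) / z) ^ 2)
      - 1 / z * (1 / ((W - 1) / z) - 1 / ((W + 1) / z))"
    proof -
      have "1 / W ^ 2 = 1 / z ^ 2 * (1 / (of_int m) ^ 2)" by (simp add: W_def power_mult_distrib)
      then show ?thesis by (simp only: inv_div_helper[OF z0])
    qed
    finally show ?thesis using False by (simp only: E1 E2) simp
  qed
  have s0: "((\<lambda>m::int. 1 / (of_int m) ^ 2 :: complex) has_sum (of_real pi ^ 2 / 3)) UNIV" by (rule Z2)
  have s1: "((\<lambda>m::int. 1 / (- 1 / z + of_int m) ^ 2) has_sum Phi (- 1 / z)) UNIV"
    unfolding Phi_def by (rule inv_sq_has_sum[OF sin_nz_Im]) (use y Im_int_div[OF y, of "-1"] in simp)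
  have s2: "((\<lambda>m::int. 1 / (- 1 / z + of_int m) - 1 / (1 / z + of_int m)) has_sum
       (ctn (- 1 / z) - ctn (1 / z))) UNIV"
    unfolding ctn_def
    by (rule inv_diff_has_sum[OF sin_nz_Im sin_nz_Im]) (use Im_int_div[OF y, of "-1"] Im_int_div[OF y, of 1] in simp_all)
  show ?thesis unfolding e
    by (intro has_sum_diff' has_sum_add has_sum_cmult_right s0 s1 s2 ind)
qed


lemma cot_exp:
  fixes x :: complex
  assumes s: "sin x \<noteq> 0"
  shows "cos x / sin x = \<i> * (1 + exp (- 2 * \<i> * x)) / (1 - exp (- 2 * \<i> * x))"
proof -
  define a where "a = exp (\<i> * x)"
  define b where "b = exp (- (\<i> * x))"
  have ab: "a * b = 1" by (simp add: a_def b_def exp_minus_inverse)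
  have b2: "exp (- 2 * \<i> * x) = b * b" by (simp add: b_def exp_add[symmetric] mult.assoc)
  have c: "cos x = (a + b) / 2" by (simp add: cos_exp_eq a_def b_def)
  have sn: "sin x = (a - b) / (2 * \<i>)" by (simp add: sin_exp_eq a_def b_def)
  have amb: "a - b \<noteq> 0" using s sn by auto
  have bnz: "b \<noteq> 0" by (simp add: b_def)
  have "cos x / sin x = \<i> * (a + b) / (a - b)"
    using amb by (simp add: c sn field_simps)
  also have "\<dots> = \<i> * (a * b + b * b) / (a * b - b * b)"
    using bnz amb by (simp add: field_simps)
  also have "\<dots> = \<i> * (1 + exp (- 2 * \<i> * x)) / (1 - exp (- 2 * \<i> * x))"
    by (simp only: ab b2)
  finally show ?thesis .
qed

lemma ctn_limit:
  fixes z :: complex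
  assumes y: "Im z > 0"
  shows "(\<lambda>k::nat. ctn (of_nat k / z)) \<longlonglongrightarrow> of_real pi * \<i>"
proof -
  have z0: "z \<noteq> 0" using y by auto
  define q where "q = exp (- 2 * \<i> * (of_real pi / z))"
  have nq: "norm q < 1"
  proof -
    have "Re (- 2 * \<i> * (of_real pi / z)) = - 2 * pi * Im z / (cmod z)^2"
      by (simp add: Re_divide Im_divide cmod_power2 field_simps)
    also have "\<dots> < 0" using y z0 by (simp add: divide_neg_pos)
    finally show ?thesis by (simp add: q_def)
  qed
  have qk: "(\<lambda>k. q ^ k) \<longlonglongrightarrow> 0" by (rule LIMSEQ_power_zero[OF nq])
  have lim: "(\<lambda>k. of_real pi * (\<i> * (1 + q ^ k) / (1 - q ^ k))) \<longlonglongrightarrow> of_real pi * (\<i> * (1 + 0) / (1 - 0))"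
    by (intro tendsto_intros qk) simp
  have ev: "eventually (\<lambda>k. of_real pi * (\<i> * (1 + q ^ k) / (1 - q ^ k)) = ctn (of_nat k / z)) sequentially"
    using eventually_gt_at_top[of "0::nat"]
  proof eventually_elim
    case (elim k)
    have Ik: "Im (of_nat k / z) \<noteq> 0" using Im_int_div[OF y, of "int k"] elim by simp
    have s: "sin (of_real pi * (of_nat k / z)) \<noteq> 0" by (rule sin_nz_Im[OF Ik])
    have e: "exp (- 2 * \<i> * (of_real pi * (of_nat k / z))) = q ^ k"
      unfolding q_def by (subst exp_of_nat_mult[symmetric]) (simp add: algebra_simps)
    have "ctn (of_nat k / z) = of_real pi * (cos (of_real pi * (of_nat k / z)) / sin (of_real pi * (of_nat k / z)))"
      unfolding ctn_def by simp
    also have "\<dots> = of_real pi * (\<i> * (1 + q ^ k) / (1 - q ^ k))"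
      using cot_exp[OF s] e by simp
    finally show ?case by simp
  qed
  show ?thesis using Lim_transform_eventually[OF lim ev] by simp
qed


lemma tele_pos:
  fixes z :: complex
  assumes y: "Im z > 0"
  assumes sm: "(\<lambda>n::int. ctn (of_int n / z) - ctn (of_int (n + 1) / z)) summable_on {1..}"
  shows "((\<lambda>n::int. ctn (of_int n / z) - ctn (of_int (n + 1) / z)) has_sum
           (ctn (1 / z) - of_real pi * \<i>)) {1..}"
proof -
  define f where "f n = ctn (of_int n / z) - ctn (of_int (n + 1) / z)" for n :: int
  obtain S where hs: "(f has_sum S) {1..}" using sm unfolding f_def summable_on_def by blast
  define h where "h k = int k + 1" for k :: nat
  have inj: "inj_on h UNIV" by (simp add: inj_on_def h_def)
  have img: "h ` UNIV = {1..}"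
  proof -
    have "x \<in> h ` UNIV" if "x \<ge> 1" for x
    proof -
      have "x = h (nat (x - 1))" using that by (simp add: h_def)
      then show ?thesis by blast
    qed
    then show ?thesis by (auto simp: h_def)
  qed
  have "((f \<circ> h) has_sum S) UNIV" using hs by (subst has_sum_reindex[OF inj, symmetric]) (simp add: img)
  then have s1: "(f \<circ> h) sums S" by (rule has_sum_imp_sums)
  define g where "g k = ctn (of_nat (Suc k) / z)" for k :: nat
  have gl: "g \<longlonglongrightarrow> of_real pi * \<i>"
    unfolding g_def using ctn_limit[OF y] by (rule LIMSEQ_Suc)
  have s2: "(\<lambda>k. g k - g (Suc k)) sums (g 0 - of_real pi * \<i>)" by (rule telescope_sums'[OF gl])
  have fg: "(f \<circ> h) = (\<lambda>k. g k - g (Suc k))"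
    by (rule ext) (simp add: f_def g_def h_def add.commute)
  have "S = g 0 - of_real pi * \<i>" using s1 s2 unfolding fg by (rule sums_unique2)
  then show ?thesis using hs by (simp add: f_def[abs_def] g_def)
qed

lemma tele_neg:
  fixes z :: complex
  assumes y: "Im z > 0"
  assumes sm: "(\<lambda>n::int. ctn (of_int n / z) - ctn (of_int (n + 1) / z)) summable_on {..-2}"
  shows "((\<lambda>n::int. ctn (of_int n / z) - ctn (of_int (n + 1) / z)) has_sum
           (ctn (1 / z) - of_real pi * \<i>)) {..-2}"
proof -
  define f where "f n = ctn (of_int n / z) - ctn (of_int (n + 1) / z)" for n :: int
  obtain S where hs: "(f has_sum S) {..-2}" using sm unfolding f_def summable_on_def by blast
  define h where "h k = - int k - 2" for k :: nat
  have inj: "inj_on h UNIV" by (simp add: inj_on_def h_def)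
  have img: "h ` UNIV = {..-2}"
  proof -
    have "x \<in> h ` UNIV" if "x \<le> -2" for x
    proof -
      have "x = h (nat (- x - 2))" using that by (simp add: h_def)
      then show ?thesis by blast
    qed
    then show ?thesis by (auto simp: h_def)
  qed
  have "((f \<circ> h) has_sum S) UNIV" using hs by (subst has_sum_reindex[OF inj, symmetric]) (simp add: img)
  then have s1: "(f \<circ> h) sums S" by (rule has_sum_imp_sums)
  define g where "g k = ctn (of_nat (Suc k) / z)" for k :: nat
  have gl: "g \<longlonglongrightarrow> of_real pi * \<i>"
    unfolding g_def using ctn_limit[OF y] by (rule LIMSEQ_Suc)
  have s2: "(\<lambda>k. g k - g (Suc k)) sums (g 0 - of_real pi * \<i>)" by (rule telescope_sums'[OF gl])
  have fg: "(f \<circ> h) = (\<lambda>k. g k - g (Suc k))"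
  proof (rule ext)
    fix k :: nat
    have e1: "of_int (h k) / z = - (of_nat (Suc (Suc k)) / z)" by (simp add: h_def minus_divide_left algebra_simps)
    have e2: "of_int (h k + 1) / z = - (of_nat (Suc k) / z)" by (simp add: h_def minus_divide_left algebra_simps)
    show "(f \<circ> h) k = g k - g (Suc k)"
      by (simp only: o_def f_def e1 e2 ctn_minus g_def) simp
  qed
  have "S = g 0 - of_real pi * \<i>" using s1 s2 unfolding fg by (rule sums_unique2)
  then show ?thesis using hs by (simp add: f_def[abs_def] g_def)
qed


theorem PS_transform:
  fixes z :: complex
  assumes y: "Im z > 0"
  shows "PS (- 1 / z) + of_real pi ^ 2 / 3 = z ^ 2 * (PS z + of_real pi ^ 2 / 3) - 2 * of_real pi * \<i> * z"
proof -
  have z0: "z \<noteq> 0" using y by auto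
  have y': "Im (- 1 / z) > 0"
  proof -
    have "Im (- 1 / z) = Im z / (cmod z)^2" by (simp add: Im_divide cmod_power2)
    then show ?thesis using y z0 by simp
  qed
  define SA where "SA = infsum (aaf z) UNIV"
  have sm: "aaf z summable_on (UNIV \<times> UNIV)"
    using aa_summable[OF y] unfolding aaf_def .
  have SAr: "SA = PS z + (of_real pi ^ 2 / 3 - 3)"
    using rows_total(2)[OF y] by (simp add: SA_def)
  have hs: "(aaf z has_sum SA) (UNIV \<times> UNIV)" using sm by (simp add: SA_def)
  have hs2: "((\<lambda>(n, m). aaf z (m, n)) has_sum SA) (UNIV \<times> UNIV)"
    using hs by (subst (asm) has_sum_swap) simp
  have sm2: "(\<lambda>(n, m). aaf z (m, n)) summable_on (UNIV \<times> UNIV)"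
    using hs2 by (rule has_sum_imp_summable)
  define colv where "colv n = infsum (\<lambda>m. aaf z (m, n)) UNIV" for n :: int
  have csum: "(\<lambda>m. aaf z (m, n)) summable_on UNIV" for n :: int
    using summable_on_SigmaD1[of "\<lambda>n m. aaf z (m, n)" UNIV "\<lambda>_. UNIV" n] sm2 by simp
  have colh: "((\<lambda>m. aaf z (m, n)) has_sum colv n) UNIV" for n
    using csum[of n] by (simp add: colv_def)
  have ct: "(colv has_sum SA) UNIV"
    by (rule has_sum_SigmaD[OF hs2[unfolded case_prod_unfold]]) (simp add: colh)
  define U where "U = (UNIV :: int set) - {0} - {-1}"
  have ct1: "(colv has_sum (SA - colv 0)) (UNIV - {0})" using ct by (rule has_sum_remove) simp
  have ctU: "(colv has_sum (SA - colv 0 - colv (-1))) U"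
    unfolding U_def using ct1 by (rule has_sum_remove) simp
  have ph0: "((\<lambda>m::int. Phi (of_int m * (- 1 / z))) has_sum PS (- 1 / z)) (UNIV - {0})"
    by (rule rows_total(1)[OF y'])
  have bij: "bij_betw uminus (UNIV - {0::int}) (UNIV - {0})"
    by (rule bij_betwI[of _ _ _ uminus]) auto
  have ph1: "((\<lambda>n::int. Phi (of_int n / z)) has_sum PS (- 1 / z)) (UNIV - {0})"
  proof -
    have "((\<lambda>n::int. Phi (of_int (- n) * (- 1 / z))) has_sum PS (- 1 / z)) (UNIV - {0})"
      using has_sum_reindex_bij_betw[OF bij, of "\<lambda>m::int. Phi (of_int m * (- 1 / z))"] ph0 by simp
    then show ?thesis by simp
  qed
  have phU: "((\<lambda>n::int. Phi (of_int n / z)) has_sum (PS (- 1 / z) - Phi (- 1 / z))) U"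
    unfolding U_def using has_sum_remove[OF ph1, of "-1"] by simp
  define t where "t n = ctn (of_int n / z)" for n :: int
  define X where "X = 1 / z ^ 2 * (PS (- 1 / z) - Phi (- 1 / z)) - (SA - colv 0 - colv (-1))"
  have Dh: "((\<lambda>n. 1 / z * (t n - t (n + 1))) has_sum X) U"
  proof -
    have h: "((\<lambda>n. 1 / z ^ 2 * Phi (of_int n / z) - colv n) has_sum X) U"
      unfolding X_def by (intro has_sum_diff' has_sum_cmult_right phU ctU)
    have "colv n = 1 / z ^ 2 * Phi (of_int n / z) - 1 / z * (t n - t (n + 1))" if "n \<in> U" for n
    proof -
      have nn: "n \<noteq> 0" "n \<noteq> -1" using that by (auto simp: U_def)
      have "colv n = 1 / z ^ 2 * Phi (of_int n / z) - 1 / z * (ctn (of_int n / z) - ctn (of_int (n + 1) / z))"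
        using has_sum_unique[OF colh[of n] col_generic[OF y nn]] .
      then show ?thesis by (simp only: t_def)
    qed
    then show ?thesis using h by (subst has_sum_cong[where g = "\<lambda>n. 1 / z ^ 2 * Phi (of_int n / z) - colv n"]) auto
  qed
  have Th: "((\<lambda>n. t n - t (n + 1)) has_sum (z * X)) U"
  proof -
    have "((\<lambda>n. z * (1 / z * (t n - t (n + 1)))) has_sum (z * X)) U"
      by (rule has_sum_cmult_right[OF Dh])
    then show ?thesis using z0 by simp
  qed
  have Tsm: "(\<lambda>n. t n - t (n + 1)) summable_on U" using Th by (rule has_sum_imp_summable)
  have U_split: "U = {1..} \<union> {..-2}" unfolding U_def by auto
  have Tp: "((\<lambda>n. t n - t (n + 1)) has_sum (ctn (1 / z) - of_real pi * \<i>)) {1..}"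
    unfolding t_def
    by (rule tele_pos[OF y summable_on_subset_banach[OF Tsm[unfolded t_def]]]) (auto simp: U_split)
  have Tn: "((\<lambda>n. t n - t (n + 1)) has_sum (ctn (1 / z) - of_real pi * \<i>)) {..-2}"
    unfolding t_def
    by (rule tele_neg[OF y summable_on_subset_banach[OF Tsm[unfolded t_def]]]) (auto simp: U_split)
  have "((\<lambda>n. t n - t (n + 1)) has_sum ((ctn (1 / z) - of_real pi * \<i>) + (ctn (1 / z) - of_real pi * \<i>))) U"
    unfolding U_split by (rule has_sum_Un_disjoint[OF Tp Tn]) auto
  from has_sum_unique[OF Th this] have zX: "z * X = 2 * (ctn (1 / z) - of_real pi * \<i>)"
    by simp
  have c01: "colv 0 + colv (-1) = 1 / z ^ 2 * (of_real pi ^ 2 / 3) + 1 / z ^ 2 * Phi (- 1 / z)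
              - 1 / z * (ctn (- 1 / z) - ctn (1 / z)) - 3"
  proof -
    have "((\<lambda>m. aaf z (m, 0) + aaf z (m, -1)) has_sum (colv 0 + colv (-1))) UNIV"
      by (intro has_sum_add colh)
    from has_sum_unique[OF this col_special[OF y]] show ?thesis .
  qed
  have cm: "ctn (- 1 / z) = - ctn (1 / z)"
    using ctn_minus[of "1 / z"] by simp
  have eq1: "z * (1 / z ^ 2 * (PS (- 1 / z) - Phi (- 1 / z)) - (SA - colv 0 - colv (-1)))
     = 2 * (ctn (1 / z) - of_real pi * \<i>)" using zX by (simp add: X_def)
  have eq2: "colv 0 + colv (-1) = 1 / z ^ 2 * (of_real pi ^ 2 / 3) + 1 / z ^ 2 * Phi (- 1 / z)
              + 2 * ctn (1 / z) / z - 3"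
    using c01 cm by (simp add: field_simps)
  have "SA = 1 / z ^ 2 * (PS (- 1 / z) + of_real pi ^ 2 / 3) - 3 + 2 * of_real pi * \<i> / z"
  proof -
    have "z * (1 / z ^ 2 * (PS (- 1 / z) - Phi (- 1 / z)) - SA + (colv 0 + colv (-1)))
       = 2 * (ctn (1 / z) - of_real pi * \<i>)" using eq1 by (simp add: algebra_simps)
    then have "z * (1 / z ^ 2 * (PS (- 1 / z) - Phi (- 1 / z)) - SA + (1 / z ^ 2 * (of_real pi ^ 2 / 3) + 1 / z ^ 2 * Phi (- 1 / z)
              + 2 * ctn (1 / z) / z - 3)) = 2 * (ctn (1 / z) - of_real pi * \<i>)"
      by (simp only: eq2)
    then have "1 / z ^ 2 * (PS (- 1 / z) - Phi (- 1 / z)) - SA + (1 / z ^ 2 * (of_real pi ^ 2 / 3) + 1 / z ^ 2 * Phi (- 1 / z)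
              + 2 * ctn (1 / z) / z - 3) = 2 * (ctn (1 / z) - of_real pi * \<i>) / z"
      using z0 by (simp add: eq_divide_eq mult.commute)
    then have "SA = 1 / z ^ 2 * (PS (- 1 / z) - Phi (- 1 / z)) + (1 / z ^ 2 * (of_real pi ^ 2 / 3) + 1 / z ^ 2 * Phi (- 1 / z)
              + 2 * ctn (1 / z) / z - 3) - 2 * (ctn (1 / z) - of_real pi * \<i>) / z"
      by (simp add: algebra_simps)
    also have "\<dots> = 1 / z ^ 2 * (PS (- 1 / z) + of_real pi ^ 2 / 3) - 3 + 2 * of_real pi * \<i> / z"
      by (simp add: algebra_simps diff_divide_distrib add_divide_distrib)
    finally show ?thesis .
  qed
  then have e3: "PS z + of_real pi ^ 2 / 3 = 1 / z ^ 2 * (PS (- 1 / z) + of_real pi ^ 2 / 3) + 2 * of_real pi * \<i> / z"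
    using SAr by simp
  have "z ^ 2 * (PS z + of_real pi ^ 2 / 3) = z ^ 2 * (1 / z ^ 2 * (PS (- 1 / z) + of_real pi ^ 2 / 3) + 2 * of_real pi * \<i> / z)"
    by (simp only: e3)
  also have "\<dots> = PS (- 1 / z) + of_real pi ^ 2 / 3 + 2 * of_real pi * \<i> * z"
    using z0 by (simp add: distrib_left power2_eq_square)
  finally show ?thesis by (simp add: algebra_simps)
qed


lemma Phi_q:
  fixes w :: complex
  assumes y: "Im w > 0"
  defines "Q \<equiv> exp (2 * of_real pi * \<i> * w)"
  shows "Phi w = - 4 * of_real pi ^ 2 * (Q / (1 - Q) ^ 2)"
proof -
  define a where "a = exp (\<i> * (of_real pi * w))"
  have a0: "a \<noteq> 0" by (simp add: a_def)
  have Qa: "Q = a * a" unfolding Q_def a_def by (simp add: exp_add[symmetric] algebra_simps)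
  have nQ: "norm Q < 1"
  proof -
    have "Re (2 * of_real pi * \<i> * w) = - 2 * pi * Im w" by simp
    also have "\<dots> < 0" using y by simp
    finally show ?thesis by (simp add: Q_def)
  qed
  have Q1: "1 - Q \<noteq> 0" using nQ by auto
  have sn: "sin (of_real pi * w) = (a - inverse a) / (2 * \<i>)"
    by (simp add: sin_exp_eq a_def exp_minus)
  have ai: "(a - inverse a) = (a * a - 1) / a" using a0 by (simp add: field_simps)
  have "sin (of_real pi * w) ^ 2 = ((a * a - 1) / a / (2 * \<i>)) ^ 2" by (simp only: sn ai)
  also have "\<dots> = (a * a - 1) ^ 2 / ((a * a) * ((2 * \<i>) ^ 2))"
    using a0 by (simp add: field_simps power2_eq_square)
  also have "\<dots> = - ((Q - 1) ^ 2 / (4 * Q))" by (simp add: Qa power2_eq_square)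
  finally have sn2: "sin (of_real pi * w) ^ 2 = - ((Q - 1) ^ 2 / (4 * Q))" .
  have "Phi w = of_real pi ^ 2 / (- ((Q - 1) ^ 2 / (4 * Q)))" by (simp add: Phi_def sn2)
  also have "\<dots> = - 4 * of_real pi ^ 2 * (Q / (1 - Q) ^ 2)"
    using Q1 a0 by (simp add: Qa field_simps power2_eq_square)
  finally show ?thesis .
qed

lemma deriv_geom_has_sum:
  fixes Q :: complex
  assumes nQ: "norm Q < 1"
  shows "((\<lambda>r. of_nat (Suc r) * Q ^ Suc r) has_sum (Q / (1 - Q) ^ 2)) UNIV"
proof -
  have s: "(\<lambda>r. Q * (of_nat (Suc r) * Q ^ r)) sums (Q * (1 / (1 - Q) ^ 2))"
    by (rule sums_mult[OF geometric_deriv_sums[OF nQ]])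
  have nQ': "norm (norm Q) < 1" using nQ by simp
  have sn: "summable (\<lambda>r. norm Q * (of_nat (Suc r) * norm Q ^ r))"
    by (rule summable_mult[OF sums_summable[OF geometric_deriv_sums[OF nQ']]])
  have eqn: "(\<lambda>r. norm (Q * (of_nat (Suc r) * Q ^ r))) = (\<lambda>r. norm Q * (of_nat (Suc r) * norm Q ^ r))"
    by (rule ext) (simp only: norm_mult norm_power norm_of_nat)
  have "((\<lambda>r. Q * (of_nat (Suc r) * Q ^ r)) has_sum (Q * (1 / (1 - Q) ^ 2))) UNIV"
    by (rule norm_summable_imp_has_sum[OF _ s]) (simp only: eqn sn)
  then show ?thesis by (simp add: algebra_simps)
qed


lemma deriv_geom_has_sum_real:
  fixes r :: real
  assumes "0 \<le> r" "r < 1"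
  shows "((\<lambda>k. of_nat (Suc k) * r ^ Suc k) has_sum (r / (1 - r) ^ 2)) UNIV"
proof -
  have nr: "norm r < 1" using assms by simp
  have s: "(\<lambda>k. r * (of_nat (Suc k) * r ^ k)) sums (r * (1 / (1 - r) ^ 2))"
    by (rule sums_mult[OF geometric_deriv_sums[OF nr]])
  have "((\<lambda>k. r * (of_nat (Suc k) * r ^ k)) has_sum (r * (1 / (1 - r) ^ 2))) UNIV"
    by (rule sums_nonneg_imp_has_sum[OF s]) (use assms in simp)
  then show ?thesis by (simp add: algebra_simps)
qed

lemma lambert:
  fixes q :: complex and T :: complex
  assumes nq: "norm q < 1"
  assumes hT: "((\<lambda>k. q ^ Suc k / (1 - q ^ Suc k) ^ 2) has_sum T) UNIV"
  shows "((\<lambda>n. of_nat (sigma1 (Suc n)) * q ^ Suc n) has_sum T) UNIV"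
proof -
  define f where "f = (\<lambda>(m::nat, r::nat). of_nat (Suc r) * q ^ (Suc m * Suc r))"
  define \<rho> where "\<rho> = norm q"
  have \<rho>: "0 \<le> \<rho>" "\<rho> < 1" using nq by (auto simp: \<rho>_def)
  have \<rho>le: "\<rho> ^ Suc m \<le> \<rho>" for m using \<rho> by (simp add: power_le_one mult_left_le)
  have \<rho>m: "0 \<le> \<rho> ^ Suc m" "\<rho> ^ Suc m < 1" for m
    using \<rho> \<rho>le[of m] by auto
  have rowh: "((\<lambda>r. norm (f (m, r))) has_sum (\<rho> ^ Suc m / (1 - \<rho> ^ Suc m) ^ 2)) UNIV" for m
  proof -
    have "(\<lambda>r. norm (f (m, r))) = (\<lambda>r. of_nat (Suc r) * (\<rho> ^ Suc m) ^ Suc r)"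
      by (rule ext) (simp only: f_def prod.case norm_mult norm_power norm_of_nat \<rho>_def power_mult)
    then show ?thesis using deriv_geom_has_sum_real[OF \<rho>m] by simp
  qed
  have bnd: "\<rho> ^ Suc m / (1 - \<rho> ^ Suc m) ^ 2 \<le> \<rho> ^ Suc m / (1 - \<rho>) ^ 2" for m
  proof -
    have "\<rho> ^ Suc m \<le> \<rho>" by (rule \<rho>le)
    then have "1 - \<rho> \<le> 1 - \<rho> ^ Suc m" by simp
    then have "(1 - \<rho>) ^ 2 \<le> (1 - \<rho> ^ Suc m) ^ 2" using \<rho> by (intro power_mono) auto
    then show ?thesis using \<rho> \<rho>m[of m] by (intro divide_left_mono mult_pos_pos) auto
  qed
  have geo: "summable (\<lambda>m. \<rho> ^ Suc m / (1 - \<rho>) ^ 2)"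
    using \<rho> by (intro summable_divide summable_mult summable_geometric) auto
  have sum_rows: "summable (\<lambda>m. \<rho> ^ Suc m / (1 - \<rho> ^ Suc m) ^ 2)"
    by (rule summable_comparison_test[OF _ geo]) (use bnd \<rho>m in \<open>auto intro!: exI[of _ 0]\<close>)
  have "(\<lambda>x. norm (f x)) summable_on UNIV \<times> UNIV"
  proof (subst Infinite_Sum.abs_summable_on_Sigma_iff, intro conjI ballI)
    fix m :: nat
    show "(\<lambda>r. norm (f (m, r))) summable_on UNIV" using rowh[of m] by (auto simp: summable_on_def)
  next
    have nr: "norm (\<Sum>\<^sub>\<infinity>r. norm (f (m, r))) = \<rho> ^ Suc m / (1 - \<rho> ^ Suc m) ^ 2" for m
    proof -
      have i: "(\<Sum>\<^sub>\<infinity>r. norm (f (m, r))) = \<rho> ^ Suc m / (1 - \<rho> ^ Suc m) ^ 2" by (rule infsumI[OF rowh])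
      have "0 \<le> \<rho> ^ Suc m / (1 - \<rho> ^ Suc m) ^ 2" using \<rho>m[of m] by simp
      then show ?thesis unfolding i real_norm_def by (rule abs_of_nonneg)
    qed
    have "(\<lambda>m. norm (\<Sum>\<^sub>\<infinity>r. norm (f (m, r)))) = (\<lambda>m. \<rho> ^ Suc m / (1 - \<rho> ^ Suc m) ^ 2)"
      by (rule ext) (rule nr)
    then show "(\<lambda>m. norm (\<Sum>\<^sub>\<infinity>r. norm (f (m, r)))) summable_on UNIV"
      using summable_nonneg_imp_summable_on[OF sum_rows] \<rho>m by simp
  qed
  then have fs: "f summable_on UNIV \<times> UNIV" by (rule Infinite_Sum.abs_summable_summable)
  define T0 where "T0 = infsum f (UNIV \<times> UNIV)"
  have fh: "(f has_sum T0) (UNIV \<times> UNIV)" using fs by (simp add: T0_def)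
  have "((\<lambda>m. q ^ Suc m / (1 - q ^ Suc m) ^ 2) has_sum T0) UNIV"
  proof (rule has_sum_SigmaD[OF fh])
    fix m :: nat
    have nQ: "norm (q ^ Suc m) < 1" using \<rho>m(2)[of m] unfolding \<rho>_def by (simp only: norm_power)
    have "(\<lambda>r. f (m, r)) = (\<lambda>r. of_nat (Suc r) * (q ^ Suc m) ^ Suc r)"
      by (rule ext) (simp only: f_def prod.case power_mult)
    then show "((\<lambda>r. f (m, r)) has_sum (q ^ Suc m / (1 - q ^ Suc m) ^ 2)) UNIV"
      using deriv_geom_has_sum[OF nQ] by simp
  qed
  then have TT0: "T = T0" using hT by (rule has_sum_unique[rotated])
  \<comment> \<open>regroup by N = (m+1)(r+1)\<close>
  define B where "B = Sigma {1::nat..} (\<lambda>N. {d. d dvd N})"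
  define g where "g = (\<lambda>(m::nat, r::nat). (Suc m * Suc r, Suc r))"
  define F where "F = (\<lambda>(N::nat, d::nat). of_nat d * q ^ N)"
  have bij: "bij_betw g (UNIV \<times> UNIV) B"
  proof (rule bij_betwI[where g = "\<lambda>(N, d). (N div d - 1, d - 1)"])
    show "g \<in> UNIV \<times> UNIV \<rightarrow> B"
    proof
      fix x :: "nat \<times> nat" assume "x \<in> UNIV \<times> UNIV"
      obtain m r where x: "x = (m, r)" by (cases x)
      have "Suc r dvd Suc m * Suc r" by (rule dvd_triv_right)
      moreover have "1 \<le> Suc m * Suc r" by simp
      ultimately show "g x \<in> B" unfolding x g_def B_def by simp
    qed
    show "(\<lambda>(N, d). (N div d - 1, d - 1)) \<in> B \<rightarrow> UNIV \<times> UNIV" by auto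
    show "(case g x of (N, d) \<Rightarrow> (N div d - 1, d - 1)) = x" if "x \<in> UNIV \<times> UNIV" for x
    proof -
      obtain m r where x: "x = (m, r)" by (cases x)
      have "Suc m * Suc r div Suc r = Suc m" by (rule nonzero_mult_div_cancel_right) simp
      then show ?thesis unfolding x g_def by (simp del: mult_Suc mult_Suc_right)
    qed
    show "g (case y of (N, d) \<Rightarrow> (N div d - 1, d - 1)) = y" if "y \<in> B" for y
    proof (cases y)
      case (Pair N d)
      with that have N: "N \<ge> 1" and dvd: "d dvd N" by (auto simp: B_def)
      have d: "d \<ge> 1"
      proof (rule ccontr)
        assume "\<not> d \<ge> 1"
        then have "d = 0" by simp
        then show False using dvd N by simp
      qed
      have dN: "d \<le> N" using dvd N by (intro dvd_imp_le) auto
      have "0 < N div d" using dN d by (simp add: div_greater_zero_iff)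
      then have q: "N div d \<ge> 1" by simp
      have e1: "Suc (N div d - 1) = N div d" using q by simp
      have e2: "Suc (d - 1) = d" using d by simp
      have e3: "N div d * d = N" using dvd by simp
      show ?thesis unfolding Pair g_def by (simp only: prod.case e1 e2 e3)
    qed
  qed
  have fF: "f = F \<circ> g" by (rule ext) (auto simp: f_def F_def g_def)
  have FB: "(F has_sum T0) B"
    using fh unfolding fF by (subst (asm) has_sum_reindex_bij_betw[OF bij, of F, unfolded o_def[symmetric]]) (simp add: o_def)
  have col: "((\<lambda>N. of_nat (sigma1 N) * q ^ N) has_sum T0) {1..}"
  proof (rule has_sum_SigmaD[OF FB[unfolded B_def]])
    fix N :: nat assume "N \<in> {1..}"
    then have fin: "finite {d. d dvd N}" by simp
    have "((\<lambda>d. F (N, d)) has_sum (\<Sum>d\<in>{d. d dvd N}. F (N, d))) {d. d dvd N}"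
      by (rule has_sum_finite[OF fin])
    moreover have "(\<Sum>d\<in>{d. d dvd N}. F (N, d)) = of_nat (sigma1 N) * q ^ N"
      by (simp add: F_def sigma1_def sum_distrib_right of_nat_sum)
    ultimately show "((\<lambda>d. F (N, d)) has_sum (of_nat (sigma1 N) * q ^ N)) {d. d dvd N}" by simp
  qed
  have inj: "inj_on Suc UNIV" by simp
  have img: "Suc ` UNIV = {1::nat..}"
  proof -
    have "x \<in> Suc ` UNIV" if "x \<ge> 1" for x :: nat
    proof -
      have "x = Suc (x - 1)" using that by simp
      then show ?thesis by blast
    qed
    then show ?thesis by auto
  qed
  have "((\<lambda>N. of_nat (sigma1 N) * q ^ N) has_sum T0) (Suc ` UNIV)" using col img by simp
  then have "(((\<lambda>N. of_nat (sigma1 N) * q ^ N) \<circ> Suc) has_sum T0) UNIV"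
    by (subst (asm) has_sum_reindex[OF inj])
  then show ?thesis using TT0 by (simp add: o_def)
qed


lemma Phi_minus: "Phi (- w) = Phi w"
  by (simp add: Phi_def)

lemma E2_PS:
  fixes \<tau> :: complex
  assumes y: "Im \<tau> > 0"
  shows "Eisenstein_E2 \<tau> = 1 + 3 / of_real pi ^ 2 * PS \<tau>"
proof -
  define q where "q = exp (2 * of_real pi * \<i> * \<tau>)"
  have nq: "norm q < 1"
  proof -
    have "Re (2 * of_real pi * \<i> * \<tau>) = - 2 * pi * Im \<tau>" by simp
    also have "\<dots> < 0" using y by simp
    finally show ?thesis by (simp add: q_def)
  qed
  have hPS: "((\<lambda>m::int. Phi (of_int m * \<tau>)) has_sum PS \<tau>) (UNIV - {0})" by (rule rows_total(1)[OF y])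
  have sPS: "(\<lambda>m::int. Phi (of_int m * \<tau>)) summable_on (UNIV - {0})" using hPS by (rule has_sum_imp_summable)
  have "(\<lambda>m::int. Phi (of_int m * \<tau>)) summable_on {1..}"
    by (rule summable_on_subset_banach[OF sPS]) auto
  then obtain P1 where P1: "((\<lambda>m::int. Phi (of_int m * \<tau>)) has_sum P1) {1..}"
    by (auto simp: summable_on_def)
  have "(\<lambda>m::int. Phi (of_int m * \<tau>)) summable_on {..-1}"
    by (rule summable_on_subset_banach[OF sPS]) auto
  then obtain P2 where P2: "((\<lambda>m::int. Phi (of_int m * \<tau>)) has_sum P2) {..-1}"
    by (auto simp: summable_on_def)
  have bij: "bij_betw uminus {1::int..} {..-1}"
    by (rule bij_betwI[of _ _ _ uminus]) auto
  have "((\<lambda>m::int. Phi (of_int (- m) * \<tau>)) has_sum P2) {1..}"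
    using has_sum_reindex_bij_betw[OF bij, of "\<lambda>m::int. Phi (of_int m * \<tau>)"] P2 by simp
  then have P2': "((\<lambda>m::int. Phi (of_int m * \<tau>)) has_sum P2) {1..}"
    by (simp add: Phi_minus[of "of_int _ * \<tau>", symmetric])
  have P12: "P1 = P2" using has_sum_unique[OF P1 P2'] .
  have "((\<lambda>m::int. Phi (of_int m * \<tau>)) has_sum (P1 + P2)) ({1..} \<union> {..-1})"
    by (rule has_sum_Un_disjoint[OF P1 P2]) auto
  moreover have "{1::int..} \<union> {..-1} = UNIV - {0}" by auto
  ultimately have "PS \<tau> = P1 + P2" using hPS by (metis has_sum_unique)
  then have PS2: "PS \<tau> = 2 * P1" using P12 by simp
  define h where "h k = int k + 1" for k :: nat
  have inj: "inj_on h UNIV" by (simp add: inj_on_def h_def)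
  have img: "h ` UNIV = {1..}"
  proof -
    have "x \<in> h ` UNIV" if "x \<ge> 1" for x
    proof -
      have "x = h (nat (x - 1))" using that by (simp add: h_def)
      then show ?thesis by blast
    qed
    then show ?thesis by (auto simp: h_def)
  qed
  have "(((\<lambda>m::int. Phi (of_int m * \<tau>)) \<circ> h) has_sum P1) UNIV"
    using P1 by (subst has_sum_reindex[OF inj, symmetric]) (simp add: img)
  then have Pn: "((\<lambda>k. Phi (of_nat (Suc k) * \<tau>)) has_sum P1) UNIV"
    by (simp add: o_def h_def add.commute)
  have Phik: "Phi (of_nat (Suc k) * \<tau>) = - 4 * of_real pi ^ 2 * (q ^ Suc k / (1 - q ^ Suc k) ^ 2)" for k
  proof -
    have yk: "Im (of_nat (Suc k) * \<tau>) > 0" using y by simp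
    have "exp (2 * of_real pi * \<i> * (of_nat (Suc k) * \<tau>)) = exp (of_nat (Suc k) * (2 * of_real pi * \<i> * \<tau>))"
      by (simp add: algebra_simps)
    also have "\<dots> = q ^ Suc k" unfolding q_def by (rule exp_of_nat_mult)
    finally show ?thesis using Phi_q[OF yk] by simp
  qed
  have c0: "(- 4 * of_real pi ^ 2 :: complex) \<noteq> 0" by simp
  have "((\<lambda>k. (1 / (- 4 * of_real pi ^ 2)) * Phi (of_nat (Suc k) * \<tau>)) has_sum (1 / (- 4 * of_real pi ^ 2)) * P1) UNIV"
    by (rule has_sum_cmult_right[OF Pn])
  then have hT: "((\<lambda>k. q ^ Suc k / (1 - q ^ Suc k) ^ 2) has_sum (1 / (- 4 * of_real pi ^ 2)) * P1) UNIV"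
    unfolding Phik using c0 by simp
  have "(\<lambda>n. of_nat (sigma1 (Suc n)) * q ^ Suc n) sums ((1 / (- 4 * of_real pi ^ 2)) * P1)"
    by (rule has_sum_imp_sums[OF lambert[OF nq hT]])
  then have sm: "(\<Sum>n. of_nat (sigma1 (Suc n)) * q ^ Suc n) = (1 / (- 4 * of_real pi ^ 2)) * P1"
    by (rule sums_unique[symmetric])
  have qE: "exp (complex_of_real (2 * pi) * \<i> * \<tau>) = q" by (simp add: q_def)
  have "Eisenstein_E2 \<tau> = 1 - 24 * ((1 / (- 4 * of_real pi ^ 2)) * P1)"
    unfolding Eisenstein_E2_def qE sm ..
  also have "\<dots> = 1 + 3 / of_real pi ^ 2 * PS \<tau>"
    by (simp add: PS2 field_simps)
  finally show ?thesis .
qed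

lemma E2_periodic:
  fixes \<tau> :: complex and n :: int
  shows "Eisenstein_E2 (\<tau> + of_int n) = Eisenstein_E2 \<tau>"
proof -
  have "exp (complex_of_real (2 * pi) * \<i> * (\<tau> + of_int n)) = exp (complex_of_real (2 * pi) * \<i> * \<tau>) * exp (2 * of_real pi * of_int n * \<i>)"
    by (simp add: algebra_simps exp_add[symmetric])
  also have "exp (2 * of_real pi * of_int n * \<i>) = 1"
  proof -
    have "exp (complex_of_real (2 * real_of_int n * pi) * \<i>) = 1" by (rule exp_integer_2pi) simp
    then show ?thesis by (simp add: mult_ac)
  qed
  finally show ?thesis by (simp add: Eisenstein_E2_def)
qed

theorem E2_S:
  fixes z :: complex
  assumes y: "Im z > 0"
  shows "Eisenstein_E2 (- 1 / z) = z ^ 2 * Eisenstein_E2 z - 6 * \<i> * z / of_real pi"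
proof -
  have z0: "z \<noteq> 0" using y by auto
  have y': "Im (- 1 / z) > 0"
  proof -
    have "Im (- 1 / z) = Im z / (cmod z)^2" by (simp add: Im_divide cmod_power2)
    then show ?thesis using y z0 by simp
  qed
  have pi0: "(of_real pi :: complex) \<noteq> 0" by simp
  have "Eisenstein_E2 (- 1 / z) = 1 + 3 / of_real pi ^ 2 * PS (- 1 / z)" by (rule E2_PS[OF y'])
  also have "\<dots> = 3 / of_real pi ^ 2 * (PS (- 1 / z) + of_real pi ^ 2 / 3)"
    using pi0 by (simp add: field_simps)
  also have "\<dots> = 3 / of_real pi ^ 2 * (z ^ 2 * (PS z + of_real pi ^ 2 / 3) - 2 * of_real pi * \<i> * z)"
    by (simp only: PS_transform[OF y])
  also have "\<dots> = z ^ 2 * (1 + 3 / of_real pi ^ 2 * PS z) - 6 * \<i> * z / of_real pi"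
    using pi0 by (simp add: field_simps power2_eq_square)
  also have "\<dots> = z ^ 2 * Eisenstein_E2 z - 6 * \<i> * z / of_real pi"
    by (simp only: E2_PS[OF y])
  finally show ?thesis .
qed


lemma Im_moebius_gamma:
  fixes z :: complex and n c :: int
  assumes y: "Im z > 0"
  shows "Im (moebius_act (1, n, c, c * n + 1) z) > 0"
    and "automorphy_factor (1, n, c, c * n + 1) z \<noteq> 0"
proof -
  define X where "X = of_int c * z + of_int (c * n + 1)"
  have X: "X = of_int c * (z + of_int n) + 1" by (simp add: X_def algebra_simps)
  have X0: "X \<noteq> 0"
  proof (cases "c = 0")
    case True then show ?thesis by (simp add: X_def)
  next
    case False
    show ?thesis
    proof
      assume "X = 0"
      then have "Im X = 0" by simp
      then show False using False y by (simp add: X_def)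
    qed
  qed
  have m: "moebius_act (1, n, c, c * n + 1) z = (z + of_int n) / X"
    by (simp add: moebius_act_def X_def)
  have "Im ((z + of_int n) / X) = Im z / (cmod X)^2"
  proof -
    have "Im ((z + of_int n) / X) = (Im (z + of_int n) * Re X - Re (z + of_int n) * Im X) / (cmod X)^2"
      by (simp add: Im_divide cmod_power2)
    also have "Im (z + of_int n) * Re X - Re (z + of_int n) * Im X = Im z"
      by (simp add: X_def algebra_simps)
    finally show ?thesis .
  qed
  then show "Im (moebius_act (1, n, c, c * n + 1) z) > 0" using y X0 m by simp
  show "automorphy_factor (1, n, c, c * n + 1) z \<noteq> 0" using X0 by (simp add: automorphy_factor_def X_def)
qed

lemma E2_gamma:
  fixes z :: complex and n c :: int
  assumes y: "Im z > 0"
  shows "Eisenstein_E2 (moebius_act (1, n, c, c * n + 1) z) =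
           automorphy_factor (1, n, c, c * n + 1) z ^ 2 * Eisenstein_E2 z
           - 6 * \<i> * of_int c * automorphy_factor (1, n, c, c * n + 1) z / of_real pi"
proof -
  define \<tau> where "\<tau> = z + of_int n"
  have yt: "Im \<tau> > 0" using y by (simp add: \<tau>_def)
  have t0: "\<tau> \<noteq> 0" using yt by auto
  define X where "X = of_int c * \<tau> + 1"
  have XA: "automorphy_factor (1, n, c, c * n + 1) z = X"
    by (simp add: automorphy_factor_def X_def \<tau>_def algebra_simps)
  have m: "moebius_act (1, n, c, c * n + 1) z = \<tau> / X"
    by (simp add: moebius_act_def X_def \<tau>_def algebra_simps)
  have E\<tau>: "Eisenstein_E2 \<tau> = Eisenstein_E2 z" by (simp add: \<tau>_def E2_periodic)
  show ?thesis
  proof (cases "c = 0")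
    case True
    have X1: "X = 1" using True by (simp add: X_def)
    show ?thesis unfolding XA m using True E\<tau> X1 by simp
  next
    case False
    have X0: "X \<noteq> 0"
    proof
      assume "X = 0"
      then have "Im X = 0" by simp
      then show False using False yt by (simp add: X_def)
    qed
    define u where "u = - 1 / \<tau> - of_int c"
    have yu: "Im u > 0"
    proof -
      have "Im (- 1 / \<tau>) = Im \<tau> / (cmod \<tau>)^2" by (simp add: Im_divide cmod_power2)
      then show ?thesis using yt t0 by (simp add: u_def)
    qed
    have u0: "u \<noteq> 0" using yu by auto
    have uX: "u = - X / \<tau>" using t0 by (simp add: u_def X_def field_simps)
    have w: "\<tau> / X = - 1 / u" using t0 X0 by (simp add: uX)
    have Eu: "Eisenstein_E2 u = Eisenstein_E2 (- 1 / \<tau>)"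
      using E2_periodic[of u c] by (simp add: u_def)
    have "Eisenstein_E2 (\<tau> / X) = u ^ 2 * Eisenstein_E2 u - 6 * \<i> * u / of_real pi"
      unfolding w by (rule E2_S[OF yu])
    also have "\<dots> = u ^ 2 * (\<tau> ^ 2 * Eisenstein_E2 \<tau> - 6 * \<i> * \<tau> / of_real pi) - 6 * \<i> * u / of_real pi"
      by (simp only: Eu E2_S[OF yt])
    also have "\<dots> = X ^ 2 * Eisenstein_E2 \<tau> - 6 * \<i> * of_int c * X / of_real pi"
      using t0 by (simp add: uX X_def field_simps power2_eq_square)
    finally show ?thesis by (simp add: XA m E\<tau>)
  qed
qed


lemma poly_inf_zero:
  fixes p :: "complex poly"
  assumes "infinite A" "\<And>x. x \<in> A \<Longrightarrow> poly p x = 0"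
  shows "p = 0"
proof (rule ccontr)
  assume "p \<noteq> 0"
  then have "finite {x. poly p x = 0}" by (rule poly_roots_finite)
  moreover have "A \<subseteq> {x. poly p x = 0}" using assms(2) by auto
  ultimately show False using assms(1) finite_subset by blast
qed

lemma coeff_mult_top:
  fixes p q :: "'a::comm_semiring_1 poly"
  assumes "degree p \<le> m" "degree q \<le> n"
  shows "Polynomial.coeff (p * q) (m + n) = Polynomial.coeff p m * Polynomial.coeff q n"
proof -
  have "Polynomial.coeff (p * q) (m + n) = (\<Sum>i\<le>m + n. Polynomial.coeff p i * Polynomial.coeff q (m + n - i))"
    by (rule coeff_mult)
  also have "\<dots> = (\<Sum>i\<in>{m}. Polynomial.coeff p i * Polynomial.coeff q (m + n - i))"
  proof (rule sum.mono_neutral_right)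
    show "\<forall>i\<in>{..m + n} - {m}. Polynomial.coeff p i * Polynomial.coeff q (m + n - i) = 0"
    proof
      fix i assume i: "i \<in> {..m + n} - {m}"
      show "Polynomial.coeff p i * Polynomial.coeff q (m + n - i) = 0"
      proof (cases "i < m")
        case True
        then have "m + n - i > n" using i by auto
        then have "Polynomial.coeff q (m + n - i) = 0" using assms(2) by (intro coeff_eq_0) auto
        then show ?thesis by simp
      next
        case False
        then have "i > m" using i by auto
        then have "Polynomial.coeff p i = 0" using assms(1) by (intro coeff_eq_0) auto
        then show ?thesis by simp
      qed
    qed
  qed auto
  finally show ?thesis by simp
qed

lemma coeff_power_top:
  fixes p :: "'a::comm_semiring_1 poly"
  assumes "degree p \<le> m"
  shows "Polynomial.coeff (p ^ a) (m * a) = Polynomial.coeff p m ^ a"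
proof (induction a)
  case 0 then show ?case by simp
next
  case (Suc a)
  have d: "degree (p ^ a) \<le> m * a"
    using degree_power_le[of p a] assms by (meson le_trans mult_le_mono1)
  have "Polynomial.coeff (p ^ Suc a) (m * Suc a) = Polynomial.coeff (p * p ^ a) (m + m * a)" by simp
  also have "\<dots> = Polynomial.coeff p m * Polynomial.coeff (p ^ a) (m * a)" by (rule coeff_mult_top[OF assms d])
  finally show ?case using Suc by simp
qed

lemma degree_power_bound:
  fixes p :: "'a::comm_semiring_1 poly"
  assumes "degree p \<le> m"
  shows "degree (p ^ a) \<le> m * a"
  using degree_power_le[of p a] assms by (meson le_trans mult_le_mono1)

definition psum :: "(nat \<Rightarrow> complex) \<Rightarrow> nat \<Rightarrow> complex poly" where
  "psum \<phi> u = (\<Sum>i\<in>{1..u}. Polynomial.monom (\<phi> i) i)"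

lemma psum_poly: "poly (psum \<phi> u) X = (\<Sum>i=1..u. \<phi> i * X ^ i)"
  by (simp add: psum_def poly_sum poly_monom)

lemma psum_degree: "degree (psum \<phi> u) \<le> u"
  unfolding psum_def
  by (rule degree_sum_le) (auto intro: order_trans[OF degree_monom_le])

lemma psum_coeff: "u \<ge> 1 \<Longrightarrow> Polynomial.coeff (psum \<phi> u) u = \<phi> u"
  by (simp add: psum_def coeff_sum coeff_monom)

lemma coeff_FG_top:
  assumes "u \<ge> 1" "v \<ge> 1"
  shows "Polynomial.coeff (psum \<phi> u ^ a * psum \<psi> v ^ b) (u * a + v * b) = \<phi> u ^ a * \<psi> v ^ b"
proof -
  have "Polynomial.coeff (psum \<phi> u ^ a * psum \<psi> v ^ b) (u * a + v * b) = Polynomial.coeff (psum \<phi> u ^ a) (u * a) * Polynomial.coeff (psum \<psi> v ^ b) (v * b)"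
    by (intro coeff_mult_top degree_power_bound psum_degree)
  also have "\<dots> = \<phi> u ^ a * \<psi> v ^ b"
    using assms by (simp add: coeff_power_top[OF psum_degree] psum_coeff)
  finally show ?thesis .
qed

lemma coeff_FG_above:
  assumes "u * a + v * b < M"
  shows "Polynomial.coeff (psum \<phi> u ^ a * psum \<psi> v ^ b) M = 0"
proof -
  have "degree (psum \<phi> u ^ a * psum \<psi> v ^ b) \<le> u * a + v * b"
    by (rule order_trans[OF degree_mult_le]) (intro add_mono degree_power_bound psum_degree)
  then show ?thesis using assms by (intro coeff_eq_0) auto
qed


definition Rf :: "(nat \<times> nat \<times> nat) set \<Rightarrow> (nat \<times> nat \<times> nat \<Rightarrow> complex) \<Rightarrow> complex poly \<Rightarrow> complex poly
   \<Rightarrow> complex poly \<Rightarrow> complex \<Rightarrow> complex \<Rightarrow> complex \<Rightarrow> complex" where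
  "Rf S cf pF pG pH E s X = (\<Sum>(a, b, e)\<in>S. cf (a, b, e) * poly pF X ^ a * poly pG X ^ b *
       (X ^ 2 * E + s * X + poly pH X) ^ e)"

lemma Rf_poly_X:
  "poly (\<Sum>(a, b, e)\<in>S. Polynomial.smult (cf (a, b, e)) (pF ^ a * pG ^ b * ([:0, s, E:] + pH) ^ e)) X
     = Rf S cf pF pG pH E s X"
  unfolding Rf_def poly_sum
  by (intro sum.cong refl) (auto simp: algebra_simps power2_eq_square)

lemma Rf_poly_s:
  "poly (\<Sum>(a, b, e)\<in>S. Polynomial.smult (cf (a, b, e) * poly pF X ^ a * poly pG X ^ b) ([:X ^ 2 * E + poly pH X, X:] ^ e)) s
     = Rf S cf pF pG pH E s X"
  unfolding Rf_def poly_sum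
  by (intro sum.cong refl) (auto simp: algebra_simps)

lemma inf_image_int:
  fixes g :: "int \<Rightarrow> complex"
  assumes "inj g"
  shows "infinite (range g)"
  using assms finite_imageD infinite_UNIV_int by blast

lemma vanish_all_T:
  fixes z \<kappa> E :: complex and K :: "complex set"
  assumes fin: "finite S" and \<kappa>: "\<kappa> \<noteq> 0"
  and K: "infinite K" "0 \<notin> K"
  and V: "\<And>c n. c \<in> K \<Longrightarrow> Rf S cf pF pG pH E (\<kappa> * c) (c * z + c * of_int n + 1) = 0"
  shows "\<And>X T. X \<noteq> 0 \<Longrightarrow> (\<Sum>(a, b, e)\<in>S. cf (a, b, e) * poly pF X ^ a * poly pG X ^ b * T ^ e) = 0"
proof -
  have step1: "Rf S cf pF pG pH E (\<kappa> * c) X = 0" if c: "c \<in> K" for c X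
  proof -
    define P where "P = (\<Sum>(a, b, e)\<in>S. Polynomial.smult (cf (a, b, e)) (pF ^ a * pG ^ b * ([:0, \<kappa> * c, E:] + pH) ^ e))"
    have c0: "c \<noteq> 0" using c K(2) by auto
    have inj: "inj (\<lambda>n::int. c * z + c * of_int n + 1)"
      using c0 by (auto simp: inj_on_def)
    have "P = 0"
    proof (rule poly_inf_zero[OF inf_image_int[OF inj]])
      fix x assume "x \<in> range (\<lambda>n::int. c * z + c * of_int n + 1)"
      then obtain n where x: "x = c * z + c * of_int n + 1" by auto
      show "poly P x = 0" unfolding P_def Rf_poly_X x by (rule V[OF c])
    qed
    then have "poly P X = 0" by simp
    then show ?thesis unfolding P_def Rf_poly_X .
  qed
  have step2: "Rf S cf pF pG pH E s X = 0" if X: "X \<noteq> 0" for s X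
  proof -
    define P where "P = (\<Sum>(a, b, e)\<in>S. Polynomial.smult (cf (a, b, e) * poly pF X ^ a * poly pG X ^ b) ([:X ^ 2 * E + poly pH X, X:] ^ e))"
    have inj: "inj_on (\<lambda>c. \<kappa> * c) K" using \<kappa> by (auto simp: inj_on_def)
    have "P = 0"
    proof (rule poly_inf_zero)
      show "infinite ((\<lambda>c. \<kappa> * c) ` K)" using K(1) finite_imageD[OF _ inj] by blast
      fix x assume "x \<in> (\<lambda>c. \<kappa> * c) ` K"
      then obtain c where c: "c \<in> K" and x: "x = \<kappa> * c" by auto
      show "poly P x = 0" unfolding P_def Rf_poly_s x by (rule step1[OF c])
    qed
    then have "poly P s = 0" by simp
    then show ?thesis unfolding P_def Rf_poly_s .
  qed
  fix X T :: complex assume X: "X \<noteq> 0"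
  define s where "s = (T - X ^ 2 * E - poly pH X) / X"
  have "X ^ 2 * E + s * X + poly pH X = T" using X by (simp add: s_def field_simps)
  then show "(\<Sum>(a, b, e)\<in>S. cf (a, b, e) * poly pF X ^ a * poly pG X ^ b * T ^ e) = 0"
    using step2[OF X, of s] unfolding Rf_def by simp
qed

lemma coeff_T:
  fixes A :: "nat \<Rightarrow> nat \<Rightarrow> complex"
  assumes fin: "finite S"
  and V: "\<And>T. (\<Sum>(a, b, e)\<in>S. cf (a, b, e) * A a b * T ^ e) = 0"
  shows "(\<Sum>(a, b, e)\<in>{x\<in>S. snd (snd x) = e0}. cf (a, b, e) * A a b) = 0"
proof -
  define P where "P = (\<Sum>(a, b, e)\<in>S. Polynomial.smult (cf (a, b, e) * A a b) (Polynomial.monom 1 e))"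
  have pP: "poly P T = (\<Sum>(a, b, e)\<in>S. cf (a, b, e) * A a b * T ^ e)" for T
    unfolding P_def poly_sum by (intro sum.cong refl) (auto simp: poly_monom)
  have "P = 0" by (rule poly_inf_zero[of UNIV]) (auto simp: pP V infinite_UNIV_char_0)
  then have "Polynomial.coeff P e0 = 0" by simp
  moreover have "Polynomial.coeff P e0 = (\<Sum>x\<in>S. if snd (snd x) = e0 then (case x of (a, b, e) \<Rightarrow> cf (a, b, e) * A a b) else 0)"
    unfolding P_def coeff_sum by (intro sum.cong refl) (auto simp: coeff_monom)
  moreover have "(\<Sum>x\<in>S. if snd (snd x) = e0 then (case x of (a, b, e) \<Rightarrow> cf (a, b, e) * A a b) else 0)
      = (\<Sum>(a, b, e)\<in>{x\<in>S. snd (snd x) = e0}. cf (a, b, e) * A a b)"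
    using fin by (simp add: sum.inter_filter)
  ultimately show ?thesis by simp
qed

lemma coeff_X:
  fixes pF pG :: "complex poly"
  assumes fin: "finite S'"
  and V: "\<And>X. X \<noteq> 0 \<Longrightarrow> (\<Sum>(a, b, e)\<in>S'. cf (a, b, e) * poly pF X ^ a * poly pG X ^ b) = 0"
  shows "(\<Sum>(a, b, e)\<in>S'. cf (a, b, e) * Polynomial.coeff (pF ^ a * pG ^ b) M) = 0"
proof -
  define P where "P = (\<Sum>(a, b, e)\<in>S'. Polynomial.smult (cf (a, b, e)) (pF ^ a * pG ^ b))"
  have pP: "poly P X = (\<Sum>(a, b, e)\<in>S'. cf (a, b, e) * poly pF X ^ a * poly pG X ^ b)" for X
    unfolding P_def poly_sum by (intro sum.cong refl) (auto simp: algebra_simps)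
  have inf: "infinite (UNIV - {0::complex})" by (simp add: infinite_UNIV_char_0)
  have "P = 0" by (rule poly_inf_zero[OF inf]) (auto simp: pP V)
  then have "Polynomial.coeff P M = 0" by simp
  moreover have "Polynomial.coeff P M = (\<Sum>(a, b, e)\<in>S'. cf (a, b, e) * Polynomial.coeff (pF ^ a * pG ^ b) M)"
    unfolding P_def coeff_sum by (intro sum.cong refl) auto
  ultimately show ?thesis by simp
qed


lemma H_open: "open upper_half_plane"
  unfolding upper_half_plane_def by (rule open_halfspace_Im_gt)

lemma H_connected: "connected upper_half_plane"
  unfolding upper_half_plane_def by (intro convex_connected convex_halfspace_Im_gt)

lemma exists_good_ball:
  fixes \<phi> \<psi> :: "complex \<Rightarrow> complex"
  assumes h1: "\<phi> holomorphic_on upper_half_plane" and h2: "\<psi> holomorphic_on upper_half_plane"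
  and n1: "\<exists>z\<in>upper_half_plane. \<phi> z \<noteq> 0" and n2: "\<exists>z\<in>upper_half_plane. \<psi> z \<noteq> 0"
  shows "\<exists>z0 r. r > 0 \<and> ball z0 r \<subseteq> upper_half_plane \<and> (\<forall>z\<in>ball z0 r. \<phi> z \<noteq> 0 \<and> \<psi> z \<noteq> 0)"
proof -
  have c1: "continuous_on upper_half_plane \<phi>" using h1 by (rule holomorphic_on_imp_continuous_on)
  have c2: "continuous_on upper_half_plane \<psi>" using h2 by (rule holomorphic_on_imp_continuous_on)
  define W1 where "W1 = upper_half_plane \<inter> \<phi> -` (- {0})"
  have oW1: "open W1" unfolding W1_def by (rule continuous_open_preimage[OF c1 H_open]) auto
  have neW1: "W1 \<noteq> {}" using n1 by (auto simp: W1_def)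
  have W1H: "W1 \<subseteq> upper_half_plane" by (auto simp: W1_def)
  obtain z0 where z0: "z0 \<in> W1" "\<psi> z0 \<noteq> 0"
  proof (rule ccontr)
    assume "\<not> thesis"
    then have allz: "\<forall>z\<in>W1. \<psi> z = 0" using that by blast
    have "\<forall>z\<in>upper_half_plane. \<psi> z = 0"
    proof
      fix z assume z: "z \<in> upper_half_plane"
      have hz: "(\<lambda>_. 0 :: complex) holomorphic_on upper_half_plane" by simp
      show "\<psi> z = 0"
        using analytic_continuation_open[OF oW1 H_open neW1 H_connected W1H h2 hz _ z] allz by blast
    qed
    then show False using n2 by blast
  qed
  define W where "W = W1 \<inter> (upper_half_plane \<inter> \<psi> -` (- {0}))"
  have oW2: "open (upper_half_plane \<inter> \<psi> -` (- {0}))" by (rule continuous_open_preimage[OF c2 H_open]) auto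
  have oW: "open W" unfolding W_def using oW1 oW2 by auto
  have z0W: "z0 \<in> W" using z0 W1H by (auto simp: W_def)
  obtain r where r: "r > 0" "ball z0 r \<subseteq> W" using oW z0W by (meson openE)
  have "ball z0 r \<subseteq> upper_half_plane" using r(2) by (auto simp: W_def W1_def)
  moreover have "\<forall>z\<in>ball z0 r. \<phi> z \<noteq> 0 \<and> \<psi> z \<noteq> 0" using r(2) by (auto simp: W_def W1_def)
  ultimately show ?thesis using r(1) by blast
qed

lemma exists_vroot:
  fixes g :: complex
  assumes "g \<noteq> 0" "v \<ge> 1"
  shows "\<exists>l. l ^ v = 1 / g"
proof -
  define l where "l = exp (- Ln g / of_nat v)"
  have "l ^ v = exp (of_nat v * (- Ln g / of_nat v))"
    unfolding l_def by (rule exp_of_nat_mult[symmetric])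
  also have "\<dots> = exp (- Ln g)" using assms(2) by simp
  also have "\<dots> = 1 / g" using assms(1) by (simp add: exp_minus inverse_eq_divide)
  finally show ?thesis by blast
qed

lemma ratio_const:
  fixes \<phi> \<psi> :: "complex \<Rightarrow> complex" and L :: "(nat \<times> nat \<times> nat) set" and B :: "complex set"
  assumes uv: "u \<ge> 1" "v \<ge> 1"
  and L: "finite L" "L \<noteq> {}" "\<And>x. x \<in> L \<Longrightarrow> cf x \<noteq> 0"
  and LM: "\<And>a b e. (a, b, e) \<in> L \<Longrightarrow> u * a + v * b = M \<and> e = e0"
  and B: "connected B" "continuous_on B \<phi>" "continuous_on B \<psi>" "\<And>z. z \<in> B \<Longrightarrow> \<phi> z \<noteq> 0 \<and> \<psi> z \<noteq> 0"
  and V: "\<And>z. z \<in> B \<Longrightarrow> (\<Sum>(a, b, e)\<in>L. cf (a, b, e) * \<phi> z ^ a * \<psi> z ^ b) = 0"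
  shows "(\<lambda>z. \<phi> z ^ v / \<psi> z ^ u) constant_on B"
proof -
  define r where "r = (\<Sum>(a, b, e)\<in>L. Polynomial.smult (cf (a, b, e)) (Polynomial.monom 1 a))"
  obtain a0 b0 where x0: "(a0, b0, e0) \<in> L"
    using L(2) LM by (metis ex_in_conv prod_cases3)
  have uniq: "x = (a0, b0, e0)" if "x \<in> L" "fst x = a0" for x
  proof -
    obtain a b e where x: "x = (a, b, e)" by (cases x)
    have e1: "u * a + v * b = M" "e = e0" using LM that(1) x by auto
    have e2: "u * a0 + v * b0 = M" using LM[OF x0] by auto
    have aa: "a = a0" using that(2) x by simp
    have "u * a0 + v * b = M" using e1(1) aa by simp
    then have "v * b = v * b0" using e2 by linarith
    then have "b = b0" using uv by simp
    then show ?thesis using x aa e1(2) by simp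
  qed
  have "Polynomial.coeff r a0 = (\<Sum>x\<in>L. if fst x = a0 then cf x else 0)"
    unfolding r_def coeff_sum by (intro sum.cong refl) (auto simp: coeff_monom)
  also have "\<dots> = (\<Sum>x\<in>{(a0, b0, e0)}. if fst x = a0 then cf x else 0)"
  proof (rule sum.mono_neutral_right)
    show "finite L" by (rule L(1))
    show "{(a0, b0, e0)} \<subseteq> L" using x0 by simp
    show "\<forall>x\<in>L - {(a0, b0, e0)}. (if fst x = a0 then cf x else 0) = 0"
    proof
      fix x assume x: "x \<in> L - {(a0, b0, e0)}"
      show "(if fst x = a0 then cf x else 0) = 0"
      proof (cases "fst x = a0")
        case True
        then have "x = (a0, b0, e0)" using x uniq by blast
        then show ?thesis using x by simp
      qed simp
    qed
  qed
  also have "\<dots> = cf (a0, b0, e0)" by simp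
  finally have "Polynomial.coeff r a0 \<noteq> 0" using L(3)[OF x0] by simp
  then have r0: "r \<noteq> 0" by auto
  define Rt where "Rt = {y. poly r y = 0}"
  have finRt: "finite Rt" unfolding Rt_def using r0 by (rule poly_roots_finite)
  have img: "(\<lambda>z. \<phi> z ^ v / \<psi> z ^ u) ` B \<subseteq> (\<lambda>y. y ^ v) ` Rt"
  proof
    fix t assume "t \<in> (\<lambda>z. \<phi> z ^ v / \<psi> z ^ u) ` B"
    then obtain z where z: "z \<in> B" and t: "t = \<phi> z ^ v / \<psi> z ^ u" by auto
    have nz: "\<phi> z \<noteq> 0" "\<psi> z \<noteq> 0" using B(4)[OF z] by auto
    obtain l where l: "l ^ v = 1 / \<psi> z" using exists_vroot[OF nz(2) uv(2)] by blast
    define Y where "Y = l ^ u * \<phi> z"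
    have "poly r Y = (\<Sum>(a, b, e)\<in>L. cf (a, b, e) * Y ^ a)"
      unfolding r_def poly_sum by (intro sum.cong refl) (auto simp: poly_monom)
    also have "\<dots> = (\<Sum>(a, b, e)\<in>L. l ^ M * (cf (a, b, e) * \<phi> z ^ a * \<psi> z ^ b))"
    proof (intro sum.cong refl, clarify)
      fix a b e assume abe: "(a, b, e) \<in> L"
      have M: "M = u * a + v * b" using LM[OF abe] by simp
      have "(l ^ v * \<psi> z) ^ b = 1" using l nz by simp
      then have "Y ^ a = l ^ (u * a) * \<phi> z ^ a * (l ^ v * \<psi> z) ^ b"
        by (simp add: Y_def power_mult_distrib power_mult)
      also have "\<dots> = l ^ M * \<phi> z ^ a * \<psi> z ^ b"
      proof -
        have p1: "(l ^ v * \<psi> z) ^ b = l ^ (v * b) * \<psi> z ^ b" by (simp add: power_mult_distrib power_mult)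
        have p2: "l ^ (u * a) * l ^ (v * b) = l ^ M" by (simp add: M power_add)
        have "l ^ (u * a) * \<phi> z ^ a * (l ^ (v * b) * \<psi> z ^ b) = (l ^ (u * a) * l ^ (v * b)) * \<phi> z ^ a * \<psi> z ^ b"
          by (simp only: mult_ac)
        then show ?thesis unfolding p1 p2 .
      qed
      finally show "cf (a, b, e) * Y ^ a = l ^ M * (cf (a, b, e) * \<phi> z ^ a * \<psi> z ^ b)"
        by (simp add: mult_ac)
    qed
    also have "\<dots> = l ^ M * (\<Sum>(a, b, e)\<in>L. cf (a, b, e) * \<phi> z ^ a * \<psi> z ^ b)"
      by (simp add: sum_distrib_left case_prod_unfold)
    also have "\<dots> = 0" using V[OF z] by simp
    finally have YR: "Y \<in> Rt" by (simp add: Rt_def)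
    have "Y ^ v = (l ^ v) ^ u * \<phi> z ^ v"
      by (simp add: Y_def power_mult_distrib power_mult[symmetric] mult.commute)
    also have "\<dots> = t" using l by (simp add: t power_one_over)
    finally show "t \<in> (\<lambda>y. y ^ v) ` Rt" using YR by blast
  qed
  have fin: "finite ((\<lambda>z. \<phi> z ^ v / \<psi> z ^ u) ` B)"
    by (rule finite_subset[OF img]) (simp add: finRt)
  have cont: "continuous_on B (\<lambda>z. \<phi> z ^ v / \<psi> z ^ u)"
    using B by (intro continuous_intros) auto
  show ?thesis by (rule continuous_finite_range_constant[OF B(1) cont fin])
qed


lemma gamma_in_Gamma1:
  fixes N :: nat and k n :: int
  shows "(1, n, k * int N, k * int N * n + 1) \<in> Gamma1 N"
proof -
  have d: "[k * int N * n + 1 = 1] (mod int N)"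
  proof -
    have "[k * int N * n = 0] (mod int N)" by (simp add: cong_def)
    then show ?thesis by (simp add: cong_add_rcancel_0)
  qed
  have c: "[k * int N = 0] (mod int N)" by (simp add: cong_def)
  show ?thesis unfolding Gamma1_def using d c by (simp add: algebra_simps)
qed

theorem lemma5p6:
  fixes N u v w :: nat
    and f g h :: "nat \<Rightarrow> complex \<Rightarrow> complex"
  assumes "N \<ge> 1"
    and "\<And>i. i \<ge> 1 \<Longrightarrow> modular_form N i (f i)"
    and "\<And>i. i \<ge> 1 \<Longrightarrow> modular_form N i (g i)"
    and "\<And>i. i \<ge> 1 \<Longrightarrow> modular_form N i (h i)"
    and "u \<ge> 1" and "v \<ge> 1" and "w \<ge> 1"
    and "\<exists>z\<in>upper_half_plane. f u z \<noteq> 0"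
    and "\<exists>z\<in>upper_half_plane. g v z \<noteq> 0"
    and "\<not> (\<exists>C. \<forall>z\<in>upper_half_plane. g v z \<noteq> 0 \<longrightarrow> f u z ^ v / g v z ^ u = C)"
  shows "alg_indep3 (\<lambda>z. \<Sum>i=1..u. f i z) (\<lambda>z. \<Sum>i=1..v. g i z)
           (\<lambda>z. Eisenstein_E2 z + (\<Sum>i=1..w. h i z))"
proof -
  note N1 = assms(1) and mf = assms(2) and mg = assms(3) and mh = assms(4)
  note u1 = assms(5) and v1 = assms(6) and nf = assms(8) and ng = assms(9) and nc = assms(10)
  have modeq: "\<And>\<phi> i M z. modular_form N i \<phi> \<Longrightarrow> M \<in> Gamma1 N \<Longrightarrow> z \<in> upper_half_plane \<Longrightarrow>
      \<phi> (moebius_act M z) = automorphy_factor M z ^ i * \<phi> z"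
    unfolding modular_form_def by blast
  have holo: "\<And>\<phi> i. modular_form N i \<phi> \<Longrightarrow> \<phi> holomorphic_on upper_half_plane"
    unfolding modular_form_def by blast
  show ?thesis unfolding alg_indep3_def
  proof (intro allI impI)
    fix S :: "(nat \<times> nat \<times> nat) set" and cf :: "nat \<times> nat \<times> nat \<Rightarrow> complex"
    assume fin: "finite S"
    assume V: "\<forall>z\<in>upper_half_plane. (\<Sum>(a, b, e)\<in>S. cf (a, b, e) * (\<Sum>i = 1..u. f i z) ^ a *
                  (\<Sum>i = 1..v. g i z) ^ b * (Eisenstein_E2 z + (\<Sum>i = 1..w. h i z)) ^ e) = 0"
    show "\<forall>m\<in>S. cf m = 0"
    proof (rule ccontr)
      assume "\<not> (\<forall>m\<in>S. cf m = 0)"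
      then obtain x1 where x1: "x1 \<in> S" "cf x1 \<noteq> 0" by blast
      define pF where "pF z = psum (\<lambda>i. f i z) u" for z
      define pG where "pG z = psum (\<lambda>i. g i z) v" for z
      define pH where "pH z = psum (\<lambda>i. h i z) w" for z
      define \<kappa> :: complex where "\<kappa> = - 6 * \<i> / of_real pi"
      have \<kappa>0: "\<kappa> \<noteq> 0" by (simp add: \<kappa>_def)
      define K :: "complex set" where "K = (\<lambda>k::nat. of_int (int (Suc k) * int N)) ` UNIV"
      have Kinf: "infinite K"
      proof -
        have "inj (\<lambda>k::nat. (of_int (int (Suc k) * int N) :: complex))"
          using N1 by (auto simp: inj_on_def)
        then show ?thesis unfolding K_def using finite_imageD by blast
      qed
      have K0: "0 \<notin> K"
      proof
        assume "0 \<in> K"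
        then obtain k where "(0::complex) = of_int (int (Suc k) * int N)" by (auto simp: K_def)
        then have "of_int (int (Suc k) * int N) = (0::complex)" by (rule sym)
        then have "int (Suc k) * int N = 0" by (simp only: of_int_eq_0_iff)
        then show False using N1 by simp
      qed
      have A: "Rf S cf (pF z) (pG z) (pH z) (Eisenstein_E2 z) (\<kappa> * c) (c * z + c * of_int n + 1) = 0"
        if z: "z \<in> upper_half_plane" and c: "c \<in> K" for z c n
      proof -
        obtain k where ck: "c = of_int (int (Suc k) * int N)" using c by (auto simp: K_def)
        define c' where "c' = int (Suc k) * int N"
        define M where "M = ((1::int), n, c', c' * n + 1)"
        have MG: "M \<in> Gamma1 N" unfolding M_def c'_def by (rule gamma_in_Gamma1)
        have yz: "Im z > 0" using z by (simp add: upper_half_plane_def)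
        define wz where "wz = moebius_act M z"
        have wH: "wz \<in> upper_half_plane"
          using Im_moebius_gamma(1)[OF yz, of n c'] by (simp add: wz_def M_def upper_half_plane_def)
        define X where "X = automorphy_factor M z"
        have Xc: "X = c * z + c * of_int n + 1"
          by (simp add: X_def M_def automorphy_factor_def ck c'_def algebra_simps)
        have sf: "(\<Sum>i = 1..u. f i wz) = poly (pF z) X"
        proof -
          have "(\<Sum>i = 1..u. f i wz) = (\<Sum>i = 1..u. f i z * X ^ i)"
            by (intro sum.cong refl) (simp add: wz_def X_def modeq[OF mf MG z] mult.commute)
          then show ?thesis by (simp add: pF_def psum_poly)
        qed
        have sg: "(\<Sum>i = 1..v. g i wz) = poly (pG z) X"
        proof -
          have "(\<Sum>i = 1..v. g i wz) = (\<Sum>i = 1..v. g i z * X ^ i)"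
            by (intro sum.cong refl) (simp add: wz_def X_def modeq[OF mg MG z] mult.commute)
          then show ?thesis by (simp add: pG_def psum_poly)
        qed
        have sh: "(\<Sum>i = 1..w. h i wz) = poly (pH z) X"
        proof -
          have "(\<Sum>i = 1..w. h i wz) = (\<Sum>i = 1..w. h i z * X ^ i)"
            by (intro sum.cong refl) (simp add: wz_def X_def modeq[OF mh MG z] mult.commute)
          then show ?thesis by (simp add: pH_def psum_poly)
        qed
        have se: "Eisenstein_E2 wz = X ^ 2 * Eisenstein_E2 z + \<kappa> * c * X"
        proof -
          have "Eisenstein_E2 wz = X ^ 2 * Eisenstein_E2 z - 6 * \<i> * of_int c' * X / of_real pi"
            using E2_gamma[OF yz, of n c'] by (simp add: wz_def X_def M_def)
          also have "\<dots> = X ^ 2 * Eisenstein_E2 z + \<kappa> * c * X"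
            by (simp add: \<kappa>_def ck c'_def field_simps)
          finally show ?thesis .
        qed
        have "(\<Sum>(a, b, e)\<in>S. cf (a, b, e) * (\<Sum>i = 1..u. f i wz) ^ a *
                  (\<Sum>i = 1..v. g i wz) ^ b * (Eisenstein_E2 wz + (\<Sum>i = 1..w. h i wz)) ^ e) = 0"
          using V wH by blast
        then show ?thesis unfolding sf sg sh se Rf_def Xc[symmetric]
          by (simp add: algebra_simps)
      qed
      define e0 where "e0 = snd (snd x1)"
      define Se where "Se = {x\<in>S. snd (snd x) = e0}"
      have finSe: "finite Se" using fin by (simp add: Se_def)
      have CX: "(\<Sum>(a, b, e)\<in>Se. cf (a, b, e) * Polynomial.coeff (pF z ^ a * pG z ^ b) Mx) = 0"
        if z: "z \<in> upper_half_plane" for z Mx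
      proof (rule coeff_X[OF finSe])
        fix X :: complex assume X: "X \<noteq> 0"
        have allT: "(\<Sum>(a, b, e)\<in>S. cf (a, b, e) * poly (pF z) X ^ a * poly (pG z) X ^ b * T ^ e) = 0" for T
          by (rule vanish_all_T[OF fin \<kappa>0 Kinf K0 A[OF z] X])
        have "(\<Sum>(a, b, e)\<in>{x\<in>S. snd (snd x) = e0}. cf (a, b, e) * (poly (pF z) X ^ a * poly (pG z) X ^ b)) = 0"
          by (rule coeff_T[OF fin]) (use allT in \<open>simp add: mult.assoc\<close>)
        then show "(\<Sum>(a, b, e)\<in>Se. cf (a, b, e) * poly (pF z) X ^ a * poly (pG z) X ^ b) = 0"
          by (simp add: Se_def mult.assoc)
      qed
      define wt :: "nat \<times> nat \<times> nat \<Rightarrow> nat" where "wt = (\<lambda>(a, b, e). u * a + v * b)"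
      define S2 where "S2 = {x\<in>Se. cf x \<noteq> 0}"
      have finS2: "finite S2" using finSe by (simp add: S2_def)
      have x1S2: "x1 \<in> S2" using x1 by (simp add: S2_def Se_def e0_def)
      define Mx where "Mx = Max (wt ` S2)"
      have wtle: "wt x \<le> Mx" if "x \<in> S2" for x
        unfolding Mx_def using finS2 that by (intro Max_ge) auto
      have "Mx \<in> wt ` S2" unfolding Mx_def using finS2 x1S2 by (intro Max_in) auto
      then obtain xm where xm: "xm \<in> S2" "wt xm = Mx" by blast
      define L where "L = {x\<in>S2. wt x = Mx}"
      have finL: "finite L" using finS2 by (simp add: L_def)
      have "xm \<in> L" using xm by (simp add: L_def)
      then have LnE: "L \<noteq> {}" by blast
      have LSe: "L \<subseteq> Se" by (auto simp: L_def S2_def)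
      have layer: "(\<Sum>(a, b, e)\<in>L. cf (a, b, e) * f u z ^ a * g v z ^ b) = 0"
        if z: "z \<in> upper_half_plane" for z
      proof -
        have "(\<Sum>(a, b, e)\<in>Se. cf (a, b, e) * Polynomial.coeff (pF z ^ a * pG z ^ b) Mx)
            = (\<Sum>(a, b, e)\<in>L. cf (a, b, e) * Polynomial.coeff (pF z ^ a * pG z ^ b) Mx)"
        proof (rule sum.mono_neutral_right[OF finSe LSe])
          show "\<forall>x\<in>Se - L. (case x of (a, b, e) \<Rightarrow> cf (a, b, e) * Polynomial.coeff (pF z ^ a * pG z ^ b) Mx) = 0"
          proof
            fix x assume x: "x \<in> Se - L"
            obtain a b e where xe: "x = (a, b, e)" by (cases x)
            show "(case x of (a, b, e) \<Rightarrow> cf (a, b, e) * Polynomial.coeff (pF z ^ a * pG z ^ b) Mx) = 0"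
            proof (cases "cf x = 0")
              case True then show ?thesis by (simp add: xe)
            next
              case False
              then have "x \<in> S2" using x by (simp add: S2_def)
              then have "wt x < Mx" using wtle[of x] x by (auto simp: L_def)
              then have "u * a + v * b < Mx" by (simp add: wt_def xe)
              then have "Polynomial.coeff (pF z ^ a * pG z ^ b) Mx = 0"
                unfolding pF_def pG_def by (rule coeff_FG_above)
              then show ?thesis by (simp add: xe)
            qed
          qed
        qed
        also have "\<dots> = (\<Sum>(a, b, e)\<in>L. cf (a, b, e) * f u z ^ a * g v z ^ b)"
        proof (intro sum.cong refl, clarify)
          fix a b e assume abe: "(a, b, e) \<in> L"
          then have "Mx = u * a + v * b" by (simp add: L_def wt_def)
          then have "Polynomial.coeff (pF z ^ a * pG z ^ b) Mx = f u z ^ a * g v z ^ b"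
            unfolding pF_def pG_def using coeff_FG_top[OF u1 v1] by simp
          then show "cf (a, b, e) * Polynomial.coeff (pF z ^ a * pG z ^ b) Mx = cf (a, b, e) * f u z ^ a * g v z ^ b"
            by simp
        qed
        finally show ?thesis using CX[OF z, of Mx] by simp
      qed
      have hf: "f u holomorphic_on upper_half_plane" using holo[OF mf[OF u1]] .
      have hg: "g v holomorphic_on upper_half_plane" using holo[OF mg[OF v1]] .
      obtain z0 r where B: "r > 0" "ball z0 r \<subseteq> upper_half_plane" "\<forall>z\<in>ball z0 r. f u z \<noteq> 0 \<and> g v z \<noteq> 0"
        using exists_good_ball[OF hf hg nf ng] by blast
      have cB1: "continuous_on (ball z0 r) (f u)"
        using holomorphic_on_imp_continuous_on[OF hf] B(2) by (rule continuous_on_subset)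
      have cB2: "continuous_on (ball z0 r) (g v)"
        using holomorphic_on_imp_continuous_on[OF hg] B(2) by (rule continuous_on_subset)
      have "(\<lambda>z. f u z ^ v / g v z ^ u) constant_on ball z0 r"
      proof (rule ratio_const[OF u1 v1 finL LnE, of _ Mx e0])
        show "\<And>x. x \<in> L \<Longrightarrow> cf x \<noteq> 0" by (auto simp: L_def S2_def)
        show "\<And>a b e. (a, b, e) \<in> L \<Longrightarrow> u * a + v * b = Mx \<and> e = e0"
          by (auto simp: L_def S2_def Se_def wt_def)
        show "connected (ball z0 r)" by simp
        show "continuous_on (ball z0 r) (f u)" by (rule cB1)
        show "continuous_on (ball z0 r) (g v)" by (rule cB2)
        show "\<And>z. z \<in> ball z0 r \<Longrightarrow> f u z \<noteq> 0 \<and> g v z \<noteq> 0" using B(3) by blast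
        show "\<And>z. z \<in> ball z0 r \<Longrightarrow> (\<Sum>(a, b, e)\<in>L. cf (a, b, e) * f u z ^ a * g v z ^ b) = 0"
          using layer B(2) by blast
      qed
      then obtain C where C: "\<forall>z\<in>ball z0 r. f u z ^ v / g v z ^ u = C" by (auto simp: constant_on_def)
      have eqH: "f u z ^ v = C * g v z ^ u" if z: "z \<in> upper_half_plane" for z
      proof (rule analytic_continuation_open[where s = "ball z0 r" and s' = upper_half_plane
                  and f = "\<lambda>z. f u z ^ v" and g = "\<lambda>z. C * g v z ^ u"])
        show "open (ball z0 r)" by simp
        show "open upper_half_plane" by (rule H_open)
        show "ball z0 r \<noteq> {}" using B(1) by simp
        show "connected upper_half_plane" by (rule H_connected)
        show "ball z0 r \<subseteq> upper_half_plane" by (rule B(2))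
        show "(\<lambda>z. f u z ^ v) holomorphic_on upper_half_plane" using hf by (intro holomorphic_intros)
        show "(\<lambda>z. C * g v z ^ u) holomorphic_on upper_half_plane" using hg by (intro holomorphic_intros)
        show "z \<in> upper_half_plane" by (rule z)
        fix t assume t: "t \<in> ball z0 r"
        have "g v t \<noteq> 0" using B(3) t by blast
        moreover have "f u t ^ v / g v t ^ u = C" using C t by blast
        ultimately show "f u t ^ v = C * g v t ^ u" by (simp add: field_simps)
      qed
      have "\<forall>z\<in>upper_half_plane. g v z \<noteq> 0 \<longrightarrow> f u z ^ v / g v z ^ u = C"
        using eqH by simp
      then show False using nc by blast
    qed
  qed
qed


end
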